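(* Let $\alpha\in\mathbb{R}\setminus\mathbb{Q}$, let $v(x)=\sum_{k=-d}^d\hat v_ke^{2\pi ikx}$ be a real-valued trigonometric polynomial of degree $d\ge1$ ($\hat v_d\neq0$), and let $E\in\mathbb{R}$. If the dual cocycle $(\alpha,L_{E,v})$ is $PH2$, then there is no $B\in C^\omega(\mathbb{R}/\mathbb{Z},SL(2,\mathbb{R}))$ with $B(x+\alpha)^{-1}S_E^v(x)B(x)=\mathrm{Id}$ for all $x$.
   Context: $S_E^v(x)=\begin{pmatrix}E-v(x)&-1\\1&0\end{pmatrix}$ is the Schrödinger cocycle of $(Hu)_n=u_{n+1}+u_{n-1}+v(x+n\alpha)u_n$. The dual operator is $(L_{v,\alpha,\theta}u)_n=\sum_{k=-d}^d\hat v_ku_{n+k}+2\cos2\pi(\theta+n\alpha)u_n$, and its cocycle is $(\alpha,L_{E,v})$, $(\theta,w)\mapsto(\theta+\alpha,L_{E,v}(\theta)w)$, where $L_{E,v}(\theta)$ is the $2d\times2d$ matrix with first row $\frac1{\hat v_d}(-\hat v_{d-1},\dots,-\hat v_1,E-2\cos2\pi\theta-\hat v_0,-\hat v_{-1},\dots,-\hat v_{-d})$ and $(j+1)$-th row $e_j^T$ for $j=1,\dots,2d-1$. Iterates: $(L_{E,v})_n(\theta)=L_{E,v}(\theta+(n-1)\alpha)\cdots L_{E,v}(\theta)$. A cocycle $(\alpha,A)$ on $\mathbb{C}^m$ is $k$-dominated if there is a continuous splitting $\mathbb{C}^m=E^+(\theta)\oplus E^-(\theta)$ with $\dim E^+=k$,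 $A(\theta)E^\pm(\theta)=E^\pm(\theta+\alpha)$, and $N\ge1$ with $\|A_N(\theta)u\|>\|A_N(\theta)w\|$ for all $\theta$ and unit $u\in E^+(\theta)$, $w\in E^-(\theta)$. A $2d$-dimensional cocycle is $PH2$ (partially hyperbolic with two-dimensional center) if it is both $(d-1)$-dominated and $(d+1)$-dominated. *)

theory Defs
  imports "HOL-Analysis.Analysis"
begin

text \<open>Vectors in C^m are functions nat => complex vanishing at indices >= m;
  m x m matrices are functions nat => nat => complex (only entries below m matter).\<close>

definition cvec :: "nat \<Rightarrow> (nat \<Rightarrow> complex) set" where
  "cvec m = {u. \<forall>i\<ge>m. u i = 0}"

definition mvmult :: "nat \<Rightarrow> (nat \<Rightarrow> nat \<Rightarrow> complex) \<Rightarrow> (nat \<Rightarrow> complex) \<Rightarrow> (nat \<Rightarrow> complex)" where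
  "mvmult m A u = (\<lambda>i. if i < m then (\<Sum>j<m. A i j * u j) else 0)"

definition vnorm :: "nat \<Rightarrow> (nat \<Rightarrow> complex) \<Rightarrow> real" where
  "vnorm m u = sqrt (\<Sum>i<m. (cmod (u i))\<^sup>2)"

fun cocycle_iter :: "nat \<Rightarrow> real \<Rightarrow> (real \<Rightarrow> nat \<Rightarrow> nat \<Rightarrow> complex) \<Rightarrow> nat \<Rightarrow> real \<Rightarrow> (nat \<Rightarrow> complex) \<Rightarrow> (nat \<Rightarrow> complex)" where
  "cocycle_iter m \<alpha> A 0 \<theta> u = u"
| "cocycle_iter m \<alpha> A (Suc n) \<theta> u = mvmult m (A (\<theta> + real n * \<alpha>)) (cocycle_iter m \<alpha> A n \<theta> u)"

definition lincomb :: "nat \<Rightarrow> (nat \<Rightarrow> nat \<Rightarrow> complex) \<Rightarrow> (nat \<Rightarrow> complex) \<Rightarrow> (nat \<Rightarrow> complex)" where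
  "lincomb k b c = (\<lambda>i. \<Sum>j<k. c j * b j i)"

definition subspace_dim :: "nat \<Rightarrow> (nat \<Rightarrow> complex) set \<Rightarrow> nat \<Rightarrow> bool" where
  "subspace_dim m V k \<longleftrightarrow> V \<subseteq> cvec m \<and>
     (\<exists>b. (\<forall>j<k. b j \<in> V) \<and>
          (\<forall>c. lincomb k b c = (\<lambda>i. 0) \<longrightarrow> (\<forall>j<k. c j = 0)) \<and>
          V = {lincomb k b c | c. True})"

text \<open>k-domination of the cocycle (alpha, A) on C^m over R/Z (theta ranges over R, objects 1-periodic).
  Continuity of the splitting: the projection onto E+ along E- depends continuously on theta.\<close>
definition dominated :: "nat \<Rightarrow> real \<Rightarrow> (real \<Rightarrow> nat \<Rightarrow> nat \<Rightarrow> complex) \<Rightarrow> nat \<Rightarrow> bool" where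
  "dominated m \<alpha> A k \<longleftrightarrow>
    (\<exists>Ep Em :: real \<Rightarrow> (nat \<Rightarrow> complex) set.
       (\<forall>\<theta>. Ep (\<theta> + 1) = Ep \<theta> \<and> Em (\<theta> + 1) = Em \<theta>) \<and>
       (\<forall>\<theta>. subspace_dim m (Ep \<theta>) k \<and> subspace_dim m (Em \<theta>) (m - k)) \<and>
       (\<forall>\<theta>. \<forall>u\<in>cvec m. \<exists>!p. fst p \<in> Ep \<theta> \<and> snd p \<in> Em \<theta> \<and> u = (\<lambda>i. fst p i + snd p i)) \<and>
       (\<exists>P :: real \<Rightarrow> nat \<Rightarrow> nat \<Rightarrow> complex.
          (\<forall>i<m. \<forall>j<m. continuous_on UNIV (\<lambda>\<theta>. P \<theta> i j)) \<and>
          (\<forall>\<theta>. \<forall>u\<in>cvec m. mvmult m (P \<theta>) u \<in> Ep \<theta> \<and>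
                            (\<lambda>i. u i - mvmult m (P \<theta>) u i) \<in> Em \<theta>)) \<and>
       (\<forall>\<theta>. mvmult m (A \<theta>) ` Ep \<theta> = Ep (\<theta> + \<alpha>) \<and> mvmult m (A \<theta>) ` Em \<theta> = Em (\<theta> + \<alpha>)) \<and>
       (\<exists>N\<ge>1. \<forall>\<theta> u w. u \<in> Ep \<theta> \<longrightarrow> w \<in> Em \<theta> \<longrightarrow> vnorm m u = 1 \<longrightarrow> vnorm m w = 1 \<longrightarrow>
          vnorm m (cocycle_iter m \<alpha> A N \<theta> u) > vnorm m (cocycle_iter m \<alpha> A N \<theta> w)))"

definition PH2 :: "nat \<Rightarrow> real \<Rightarrow> (real \<Rightarrow> nat \<Rightarrow> nat \<Rightarrow> complex) \<Rightarrow> bool" where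
  "PH2 d \<alpha> A \<longleftrightarrow> dominated (2*d) \<alpha> A (d - 1) \<and> dominated (2*d) \<alpha> A (d + 1)"

definition dualL :: "nat \<Rightarrow> (int \<Rightarrow> complex) \<Rightarrow> real \<Rightarrow> real \<Rightarrow> nat \<Rightarrow> nat \<Rightarrow> complex" where
  "dualL d vh E \<theta> i j =
     (if i < 2*d \<and> j < 2*d then
        (if i = 0 then
           (let k = int d - 1 - int j in
              (if k = 0 then complex_of_real (E - 2 * cos (2*pi*\<theta>)) - vh 0 else - vh k) / vh (int d))
         else (if j = i - 1 then 1 else 0))
      else 0)"

definition trig_poly :: "nat \<Rightarrow> (int \<Rightarrow> complex) \<Rightarrow> real \<Rightarrow> complex" where
  "trig_poly d vh x = (\<Sum>k\<in>{-int d..int d}. vh k * exp (2 * pi * \<i> * of_int k * of_real x))"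

definition schrodinger :: "(real \<Rightarrow> real) \<Rightarrow> real \<Rightarrow> real \<Rightarrow> real^2^2" where
  "schrodinger v E x = vector [vector [E - v x, -1], vector [1, 0]]"

definition real_analytic :: "(real \<Rightarrow> real) \<Rightarrow> bool" where
  "real_analytic f \<longleftrightarrow> (\<forall>x. \<exists>r>0. \<exists>c :: nat \<Rightarrow> real.
      \<forall>y. \<bar>y - x\<bar> < r \<longrightarrow> (\<lambda>n. c n * (y - x) ^ n) sums f y)"

definition analytic_SL2 :: "(real \<Rightarrow> real^2^2) \<Rightarrow> bool" where
  "analytic_SL2 B \<longleftrightarrow> (\<forall>x. B (x + 1) = B x) \<and> (\<forall>x. det (B x) = 1) \<and>
     (\<forall>i j. real_analytic (\<lambda>x. B x $ i $ j))"

end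

theory Submission
  imports Defs
begin

lemma cvecI: "(\<And>i. i \<ge> m \<Longrightarrow> u i = 0) \<Longrightarrow> u \<in> cvec m"
  by (auto simp: cvec_def)
lemma cvecD: "u \<in> cvec m \<Longrightarrow> i \<ge> m \<Longrightarrow> u i = 0"
  by (auto simp: cvec_def)

lemma mvmult_cvec[simp]: "mvmult m M u \<in> cvec m"
  by (auto simp: cvec_def mvmult_def)

lemma mvmult_add: "mvmult m M (\<lambda>i. u i + v i) = (\<lambda>i. mvmult m M u i + mvmult m M v i)"
  by (auto simp: mvmult_def algebra_simps sum.distrib)

lemma mvmult_scale: "mvmult m M (\<lambda>i. c * u i) = (\<lambda>i. c * mvmult m M u i)"
  by (auto simp: mvmult_def algebra_simps sum_distrib_left)

lemma mvmult_zero[simp]: "mvmult m M (\<lambda>i. 0) = (\<lambda>i. 0)"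
  by (auto simp: mvmult_def)

lemma iter_cvec: "u \<in> cvec m \<Longrightarrow> cocycle_iter m \<alpha> A n \<theta> u \<in> cvec m"
  by (cases n) auto

lemma iter_add: "cocycle_iter m \<alpha> A n \<theta> (\<lambda>i. u i + v i) =
   (\<lambda>i. cocycle_iter m \<alpha> A n \<theta> u i + cocycle_iter m \<alpha> A n \<theta> v i)"
  by (induction n) (auto simp: mvmult_add)

lemma iter_scale: "cocycle_iter m \<alpha> A n \<theta> (\<lambda>i. c * u i) = (\<lambda>i. c * cocycle_iter m \<alpha> A n \<theta> u i)"
  by (induction n) (auto simp: mvmult_scale)

lemma iter_zero[simp]: "cocycle_iter m \<alpha> A n \<theta> (\<lambda>i. 0) = (\<lambda>i. 0)"
  by (induction n) auto

lemma iter_compose: "cocycle_iter m \<alpha> A (a + b) \<theta> u =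
   cocycle_iter m \<alpha> A b (\<theta> + real a * \<alpha>) (cocycle_iter m \<alpha> A a \<theta> u)"
  by (induction b) (auto simp: algebra_simps)

lemma vnorm_L2: "vnorm m u = L2_set (\<lambda>i. cmod (u i)) {..<m}"
  by (simp add: vnorm_def L2_set_def)

lemma vnorm_nonneg[simp]: "vnorm m u \<ge> 0"
  by (simp add: vnorm_L2)

lemma vnorm_scale: "vnorm m (\<lambda>i. c * u i) = cmod c * vnorm m u"
proof -
  have "vnorm m (\<lambda>i. c * u i) = sqrt ((cmod c)\<^sup>2 * (\<Sum>i<m. (cmod (u i))\<^sup>2))"
    by (simp add: vnorm_def norm_mult power_mult_distrib sum_distrib_left)
  also have "\<dots> = cmod c * vnorm m u" by (simp add: vnorm_def real_sqrt_mult)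
  finally show ?thesis .
qed

lemma vnorm_comp_le: "i < m \<Longrightarrow> cmod (u i) \<le> vnorm m u"
  unfolding vnorm_L2 by (rule member_le_L2_set) auto

lemma vnorm_le_sum: "vnorm m u \<le> (\<Sum>i<m. cmod (u i))"
  unfolding vnorm_L2 by (rule L2_set_le_sum) auto

lemma vnorm_triangle: "vnorm m (\<lambda>i. u i + v i) \<le> vnorm m u + vnorm m v"
proof -
  have "vnorm m (\<lambda>i. u i + v i) \<le> L2_set (\<lambda>i. cmod (u i) + cmod (v i)) {..<m}"
    unfolding vnorm_L2 by (rule L2_set_mono) (auto intro: norm_triangle_ineq)
  also have "\<dots> \<le> vnorm m u + vnorm m v"
    unfolding vnorm_L2 by (rule L2_set_triangle_ineq)
  finally show ?thesis .
qed

lemma vnorm_zero_iff: "u \<in> cvec m \<Longrightarrow> vnorm m u = 0 \<longleftrightarrow> u = (\<lambda>i. 0)"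
proof
  assume u: "u \<in> cvec m" and z: "vnorm m u = 0"
  show "u = (\<lambda>i. 0)"
  proof
    fix i show "u i = 0"
    proof (cases "i < m")
      case True then show ?thesis using vnorm_comp_le[OF True, of u] z by simp
    next
      case False then show ?thesis using u by (auto simp: cvec_def)
    qed
  qed
qed (simp add: vnorm_def)

lemma lincomb_add: "lincomb k b (\<lambda>j. c j + c' j) = (\<lambda>i. lincomb k b c i + lincomb k b c' i)"
  by (auto simp: lincomb_def algebra_simps sum.distrib)

lemma lincomb_scale: "lincomb k b (\<lambda>j. x * c j) = (\<lambda>i. x * lincomb k b c i)"
  by (auto simp: lincomb_def algebra_simps sum_distrib_left)

lemma subspace_add: "subspace_dim m V k \<Longrightarrow> u \<in> V \<Longrightarrow> v \<in> V \<Longrightarrow> (\<lambda>i. u i + v i) \<in> V"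
  unfolding subspace_dim_def by (auto simp: lincomb_add[symmetric])

lemma subspace_scale: "subspace_dim m V k \<Longrightarrow> u \<in> V \<Longrightarrow> (\<lambda>i. x * u i) \<in> V"
  unfolding subspace_dim_def by (auto simp: lincomb_scale[symmetric])

lemma subspace_zero: "subspace_dim m V k \<Longrightarrow> (\<lambda>i. 0) \<in> V"
proof -
  assume "subspace_dim m V k"
  then obtain b where "V = {lincomb k b c | c. True}" by (auto simp: subspace_dim_def)
  moreover have "lincomb k b (\<lambda>j. 0) = (\<lambda>i. 0)" by (simp add: lincomb_def)
  ultimately show ?thesis by (metis (mono_tags, lifting) mem_Collect_eq)
qed

lemma subspace_cvec: "subspace_dim m V k \<Longrightarrow> u \<in> V \<Longrightarrow> u \<in> cvec m"
  unfolding subspace_dim_def by auto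



locale dual =
  fixes d :: nat and vh :: "int \<Rightarrow> complex" and E :: real and \<alpha> :: real
  assumes d1: "1 \<le> d" and vhd: "vh (int d) \<noteq> 0"
    and herm: "\<And>k. \<bar>k\<bar> \<le> int d \<Longrightarrow> vh (-k) = cnj (vh k)"
begin

abbreviation A where "A \<equiv> dualL d vh E"

lemma row0:
  "mvmult (2*d) (A \<theta>) X 0 * vh (int d) =
     complex_of_real (E - 2 * cos (2*pi*\<theta>)) * X (d-1) - (\<Sum>k\<in>{-int d..int d - 1}. vh k * X (nat (int d - 1 - k)))"
proof -
  have "mvmult (2*d) (A \<theta>) X 0 = (\<Sum>j<2*d. A \<theta> 0 j * X j)"
    using d1 by (simp add: mvmult_def)
  also have "\<dots> = (\<Sum>k\<in>{-int d..int d - 1}. A \<theta> 0 (nat (int d - 1 - k)) * X (nat (int d - 1 - k)))"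
    by (rule sum.reindex_bij_witness[where i="\<lambda>k. nat (int d - 1 - k)" and j="\<lambda>j. int d - 1 - int j"]) auto
  finally have 1: "mvmult (2*d) (A \<theta>) X 0 * vh (int d) =
      (\<Sum>k\<in>{-int d..int d - 1}. A \<theta> 0 (nat (int d - 1 - k)) * vh (int d) * X (nat (int d - 1 - k)))"
    by (simp add: sum_distrib_right sum_distrib_left algebra_simps)
  have 2: "A \<theta> 0 (nat (int d - 1 - k)) * vh (int d) * X (nat (int d - 1 - k)) =
      - (vh k * X (nat (int d - 1 - k))) + (if k = 0 then complex_of_real (E - 2 * cos (2*pi*\<theta>)) * X (d-1) else 0)"
    if "k \<in> {-int d..int d - 1}" for k
  proof -
    have a: "nat (int d - 1 - k) < 2*d" using that by auto
    have b: "int d - 1 - int (nat (int d - 1 - k)) = k" using that by auto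
    show ?thesis
      using a b vhd d1 by (auto simp: dualL_def Let_def field_simps nat_diff_distrib)
  qed
  have 3: "(\<Sum>k\<in>{-int d..int d - 1}. (if k = 0 then complex_of_real (E - 2 * cos (2*pi*\<theta>)) * X (d-1) else 0))
     = complex_of_real (E - 2 * cos (2*pi*\<theta>)) * X (d-1)"
    using d1 by (simp add: sum.delta)
  have 4: "(\<Sum>k\<in>{-int d..int d - 1}. A \<theta> 0 (nat (int d - 1 - k)) * vh (int d) * X (nat (int d - 1 - k)))
     = (\<Sum>k\<in>{-int d..int d - 1}. - (vh k * X (nat (int d - 1 - k))) + (if k = 0 then complex_of_real (E - 2 * cos (2*pi*\<theta>)) * X (d-1) else 0))"
    by (rule sum.cong) (auto simp only: 2)
  show ?thesis
    unfolding 1 4 sum.distrib 3 by (simp add: sum_negf)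
qed

lemma rowi: "1 \<le> i \<Longrightarrow> i < 2*d \<Longrightarrow> mvmult (2*d) (A \<theta>) X i = X (i - 1)"
proof -
  assume i: "1 \<le> i" "i < 2*d"
  have "mvmult (2*d) (A \<theta>) X i = (\<Sum>j<2*d. (if j = i - 1 then 1 else 0) * X j)"
    using i by (auto simp: mvmult_def dualL_def intro!: sum.cong)
  also have "\<dots> = (\<Sum>j<2*d. (if j = i - 1 then X j else 0))"
    by (rule sum.cong) auto
  also have "\<dots> = X (i - 1)" using i by (simp add: sum.delta')
  finally show ?thesis .
qed

lemma A_inj: "X \<in> cvec (2*d) \<Longrightarrow> mvmult (2*d) (A \<theta>) X = (\<lambda>i. 0) \<Longrightarrow> X = (\<lambda>i. 0)"
proof -
  assume X: "X \<in> cvec (2*d)" and z: "mvmult (2*d) (A \<theta>) X = (\<lambda>i. 0)"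
  have low: "X j = 0" if "j < 2*d - 1" for j
    using rowi[of "j+1" \<theta> X] z that d1 by (auto dest: fun_cong[where x="j+1"])
  have "mvmult (2*d) (A \<theta>) X 0 = (\<Sum>j<2*d. A \<theta> 0 j * X j)"
    using d1 by (simp add: mvmult_def)
  also have "\<dots> = (\<Sum>j<Suc (2*d-1). A \<theta> 0 j * X j)" using d1 by simp
  also have "\<dots> = A \<theta> 0 (2*d-1) * X (2*d-1)"
    by (simp add: low)
  also have "\<dots> = - vh (- int d) / vh (int d) * X (2*d-1)"
  proof -
    have "int d - 1 - int (2 * d - 1) = - int d" using d1 by (simp add: of_nat_diff)
    then show ?thesis using d1 by (simp add: dualL_def Let_def)
  qed
  finally have "- vh (- int d) / vh (int d) * X (2*d-1) = 0" using z by (metis)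
  moreover have "vh (- int d) \<noteq> 0" using herm[of "int d"] vhd by simp
  ultimately have top: "X (2*d-1) = 0" using vhd by simp
  show ?thesis
  proof
    fix i show "X i = 0"
    proof (cases "i < 2*d - 1")
      case True then show ?thesis by (rule low)
    next
      case False
      then have "i = 2*d-1 \<or> i \<ge> 2*d" by auto
      then show ?thesis using top X by (auto simp: cvec_def)
    qed
  qed
qed

lemma iter_inj: "X \<in> cvec (2*d) \<Longrightarrow> cocycle_iter (2*d) \<alpha> A n \<theta> X = (\<lambda>i. 0) \<Longrightarrow> X = (\<lambda>i. 0)"
proof (induction n)
  case 0 then show ?case by simp
next
  case (Suc n)
  then have "cocycle_iter (2*d) \<alpha> A n \<theta> X = (\<lambda>i. 0)"
    using A_inj iter_cvec by (metis cocycle_iter.simps(2))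
  then show ?case using Suc by blast
qed

end


lemma sum_sym_int: "(\<Sum>k\<in>{-int n..int n}. g k) = g 0 + (\<Sum>k\<in>{1..n}. g (int k) + g (- int k))"
proof (induction n)
  case 0 then show ?case by simp
next
  case (Suc n)
  have "{-int (Suc n)..int (Suc n)} = insert (int (Suc n)) (insert (- int (Suc n)) {-int n..int n})"
    by auto
  then have "(\<Sum>k\<in>{-int (Suc n)..int (Suc n)}. g k) = g (int (Suc n)) + (g (- int (Suc n)) + (\<Sum>k\<in>{-int n..int n}. g k))"
    by simp
  then show ?case using Suc by (simp add: algebra_simps)
qed

context dual
begin

definition vecof :: "(int \<Rightarrow> complex) \<Rightarrow> int \<Rightarrow> nat \<Rightarrow> complex" where
  "vecof u n = (\<lambda>i. if i < 2*d then u (n + int d - 1 - int i) else 0)"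

definition recur :: "(int \<Rightarrow> complex) \<Rightarrow> int \<Rightarrow> bool" where
  "recur u n \<longleftrightarrow> (\<Sum>k\<in>{-int d..int d}. vh k * u (n+k)) + complex_of_real (2 * cos (2*pi*(of_int n * \<alpha>))) * u n
     = complex_of_real E * u n"

lemma vecof_cvec[simp]: "vecof u n \<in> cvec (2*d)"
  by (auto simp: vecof_def cvec_def)

lemma step:
  assumes "recur u n"
  shows "mvmult (2*d) (A (of_int n * \<alpha>)) (vecof u n) = vecof u (n+1)"
proof
  fix i
  show "mvmult (2*d) (A (of_int n * \<alpha>)) (vecof u n) i = vecof u (n+1) i"
  proof (cases "i = 0")
    case True
    let ?X = "vecof u n"
    have x1: "?X (d-1) = u n" using d1 by (simp add: vecof_def of_nat_diff)
    have x2: "(\<Sum>k\<in>{-int d..int d - 1}. vh k * ?X (nat (int d - 1 - k))) = (\<Sum>k\<in>{-int d..int d - 1}. vh k * u (n + k))"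
      by (rule sum.cong) (auto simp: vecof_def)
    have split: "{-int d..int d} = insert (int d) {-int d..int d - 1}" by auto
    have r: "(\<Sum>k\<in>{-int d..int d - 1}. vh k * u (n+k)) + vh (int d) * u (n + int d)
       + complex_of_real (2 * cos (2*pi*(of_int n * \<alpha>))) * u n = complex_of_real E * u n"
      using assms unfolding recur_def split by (simp add: algebra_simps)
    have "mvmult (2*d) (A (of_int n * \<alpha>)) ?X 0 * vh (int d) = vh (int d) * u (n + int d)"
      unfolding row0 x1 x2 using r by (simp add: algebra_simps)
    then have "mvmult (2*d) (A (of_int n * \<alpha>)) ?X 0 = u (n + int d)"
      using vhd by (simp add: field_simps)
    then show ?thesis using True d1 by (simp add: vecof_def)
  next
    case False
    show ?thesis
    proof (cases "i < 2*d")
      case True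
      then show ?thesis using False rowi[of i] by (auto simp: vecof_def of_nat_diff algebra_simps)
    next
      case False
      then show ?thesis by (simp add: vecof_def mvmult_def)
    qed
  qed
qed

lemma step_iter:
  assumes "\<And>n. recur u n"
  shows "cocycle_iter (2*d) \<alpha> A j (of_int n * \<alpha>) (vecof u n) = vecof u (n + int j)"
proof (induction j)
  case 0 then show ?case by simp
next
  case (Suc j)
  have "of_int n * \<alpha> + real j * \<alpha> = of_int (n + int j) * \<alpha>" by (simp add: algebra_simps)
  then show ?case using Suc step[OF assms, of "n + int j"] by (simp add: algebra_simps)
qed

definition omega :: "(nat \<Rightarrow> complex) \<Rightarrow> (nat \<Rightarrow> complex) \<Rightarrow> complex" where
  "omega X Y = (\<Sum>k\<in>{1..d}. \<Sum>j<k. vh (int k) * X (d-k+j) * cnj (Y (d+j)) - cnj (vh (int k)) * cnj (Y (d-k+j)) * X (d+j))"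

definition Om :: "int \<Rightarrow> (int \<Rightarrow> complex) \<Rightarrow> (int \<Rightarrow> complex) \<Rightarrow> complex" where
  "Om N u w = (\<Sum>k\<in>{1..d}. \<Sum>j<k. vh (int k) * u (N - int j + int k) * cnj (w (N - int j))
       - cnj (vh (int k)) * cnj (w (N - int j + int k)) * u (N - int j))"

lemma O1: "omega X Y = Om 0 (\<lambda>t. X (nat (int d - t))) (\<lambda>t. Y (nat (int d - t)))"
  unfolding omega_def Om_def
proof (intro sum.cong refl)
  fix k j assume k: "k \<in> {1..d}" and j: "j \<in> {..<k}"
  have a: "nat (int d - (0 - int j + int k)) = d - k + j" using k j by auto
  have b: "nat (int d - (0 - int j)) = d + j" by auto
  show "vh (int k) * X (d-k+j) * cnj (Y (d+j)) - cnj (vh (int k)) * cnj (Y (d-k+j)) * X (d+j) =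
    vh (int k) * X (nat (int d - (0 - int j + int k))) * cnj (Y (nat (int d - (0 - int j)))) -
    cnj (vh (int k)) * cnj (Y (nat (int d - (0 - int j + int k)))) * X (nat (int d - (0 - int j)))"
    unfolding a b ..
qed

lemma O2: "Om (N+1) u w = Om N (\<lambda>t. u (t+1)) (\<lambda>t. w (t+1))"
  unfolding Om_def by (simp add: algebra_simps)

lemma O3:
  assumes "\<And>t. N - int d + 1 \<le> t \<Longrightarrow> t \<le> N + int d \<Longrightarrow> u t = u' t \<and> w t = w' t"
  shows "Om N u w = Om N u' w'"
  unfolding Om_def
proof (intro sum.cong refl)
  fix k j assume k: "k \<in> {1..d}" and j: "j \<in> {..<k}"
  have "u (N - int j + int k) = u' (N - int j + int k)" "w (N - int j + int k) = w' (N - int j + int k)"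
    "u (N - int j) = u' (N - int j)" "w (N - int j) = w' (N - int j)"
    using assms[of "N - int j + int k"] assms[of "N - int j"] k j by auto
  then show "vh (int k) * u (N - int j + int k) * cnj (w (N - int j)) - cnj (vh (int k)) * cnj (w (N - int j + int k)) * u (N - int j) =
     vh (int k) * u' (N - int j + int k) * cnj (w' (N - int j)) - cnj (vh (int k)) * cnj (w' (N - int j + int k)) * u' (N - int j)"
    by simp
qed

lemma O4: "Om N u w - Om (N-1) u w =
   cnj (w N) * (\<Sum>k\<in>{1..d}. vh (int k) * u (N + int k) + cnj (vh (int k)) * u (N - int k))
   - u N * cnj (\<Sum>k\<in>{1..d}. vh (int k) * w (N + int k) + cnj (vh (int k)) * w (N - int k))"
proof -
  define f where "f k m = vh (int k) * u (m + int k) * cnj (w m) - cnj (vh (int k)) * cnj (w (m + int k)) * u m" for k m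
  have "Om N u w = (\<Sum>k\<in>{1..d}. \<Sum>j<k. f k (N - int j))"
    unfolding Om_def f_def by (simp add: algebra_simps)
  moreover have "Om (N-1) u w = (\<Sum>k\<in>{1..d}. \<Sum>j<k. f k (N - int (Suc j)))"
    unfolding Om_def f_def by (simp add: algebra_simps)
  ultimately have "Om N u w - Om (N-1) u w = (\<Sum>k\<in>{1..d}. \<Sum>j<k. f k (N - int j) - f k (N - int (Suc j)))"
    by (simp add: sum_subtractf)
  also have "\<dots> = (\<Sum>k\<in>{1..d}. f k N - f k (N - int k))"
    by (subst sum_lessThan_telescope'[where f="\<lambda>j. f _ (N - int j)"]) simp
  also have "\<dots> = (\<Sum>k\<in>{1..d}. cnj (w N) * (vh (int k) * u (N + int k) + cnj (vh (int k)) * u (N - int k))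
       - u N * cnj (vh (int k) * w (N + int k) + cnj (vh (int k)) * w (N - int k)))"
    by (rule sum.cong) (auto simp: f_def algebra_simps)
  finally show ?thesis by (simp add: sum_subtractf sum_distrib_left)
qed

end


context dual
begin

lemma O5: "(\<Sum>k\<in>{1..d}. vh (int k) * u (N + int k) + cnj (vh (int k)) * u (N - int k))
   = (\<Sum>k\<in>{-int d..int d}. vh k * u (N + k)) - vh 0 * u N"
proof -
  have "(\<Sum>k\<in>{-int d..int d}. vh k * u (N + k)) = vh 0 * u N + (\<Sum>k\<in>{1..d}. vh (int k) * u (N + int k) + vh (- int k) * u (N + - int k))"
    by (subst sum_sym_int) simp
  also have "(\<Sum>k\<in>{1..d}. vh (int k) * u (N + int k) + vh (- int k) * u (N + - int k))
     = (\<Sum>k\<in>{1..d}. vh (int k) * u (N + int k) + cnj (vh (int k)) * u (N - int k))"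
    by (rule sum.cong) (auto simp: herm)
  finally show ?thesis by simp
qed

lemma vh0_real: "cnj (vh 0) = vh 0"
  using herm[of 0] by simp

lemma omega_inv: "omega (mvmult (2*d) (A \<theta>) X) (mvmult (2*d) (A \<theta>) Y) = omega X Y"
proof -
  define X' where "X' = mvmult (2*d) (A \<theta>) X"
  define Y' where "Y' = mvmult (2*d) (A \<theta>) Y"
  define s where "s t = (if t = int d + 1 then X' 0 else X (nat (int d - t)))" for t
  define r where "r t = (if t = int d + 1 then Y' 0 else Y (nat (int d - t)))" for t
  have sh: "X' (nat (int d - t)) = s (t+1) \<and> Y' (nat (int d - t)) = r (t+1)"
    if "0 - int d + 1 \<le> t" "t \<le> 0 + int d" for t
  proof (cases "t = int d")
    case True then show ?thesis by (simp add: s_def r_def)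
  next
    case False
    then have a: "1 \<le> nat (int d - t)" "nat (int d - t) < 2*d" using that by auto
    have b: "nat (int d - t) - 1 = nat (int d - (t+1))" using that False by auto
    show ?thesis using False rowi[OF a, of \<theta> X] rowi[OF a, of \<theta> Y] unfolding X'_def Y'_def s_def r_def b
      by simp
  qed
  have "omega X' Y' = Om 0 (\<lambda>t. s (t+1)) (\<lambda>t. r (t+1))"
    unfolding O1 by (rule O3) (use sh in auto)
  also have "\<dots> = Om 1 s r" using O2[of 0 s r] by simp
  also have "\<dots> = Om 0 s r + (cnj (r 1) * (\<Sum>k\<in>{1..d}. vh (int k) * s (1 + int k) + cnj (vh (int k)) * s (1 - int k))
       - s 1 * cnj (\<Sum>k\<in>{1..d}. vh (int k) * r (1 + int k) + cnj (vh (int k)) * r (1 - int k)))"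
    using O4[of 1 s r] by (simp add: algebra_simps)
  also have "\<dots> = Om 0 s r"
  proof -
    define c where "c = complex_of_real (E - 2 * cos (2*pi*\<theta>)) - vh 0"
    have key: "(\<Sum>k\<in>{1..d}. vh (int k) * q (1 + int k) + cnj (vh (int k)) * q (1 - int k)) = c * q 1"
      if q: "q = (\<lambda>t. if t = int d + 1 then mvmult (2*d) (A \<theta>) Z 0 else Z (nat (int d - t)))" for q Z
    proof -
      have e1: "(\<Sum>k\<in>{-int d..int d}. vh k * q (1 + k)) =
         (\<Sum>k\<in>{-int d..int d - 1}. vh k * Z (nat (int d - 1 - k))) + vh (int d) * mvmult (2*d) (A \<theta>) Z 0"
      proof -
        have split: "{-int d..int d} = insert (int d) {-int d..int d - 1}" by auto
        have "(\<Sum>k\<in>{-int d..int d - 1}. vh k * q (1 + k)) = (\<Sum>k\<in>{-int d..int d - 1}. vh k * Z (nat (int d - 1 - k)))"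
          by (rule sum.cong) (auto simp: q diff_diff_eq)
        then show ?thesis unfolding split by (simp add: q)
      qed
      have q1: "q 1 = Z (d - 1)" using d1 by (simp add: q nat_diff_distrib)
      have "(\<Sum>k\<in>{1..d}. vh (int k) * q (1 + int k) + cnj (vh (int k)) * q (1 - int k))
          = (\<Sum>k\<in>{-int d..int d}. vh k * q (1 + k)) - vh 0 * q 1" by (rule O5)
      also have "\<dots> = c * q 1"
        unfolding e1 q1 using row0[of \<theta> Z] by (simp add: c_def algebra_simps)
      finally show ?thesis .
    qed
    have cr: "cnj c = c" by (simp add: c_def vh0_real)
    have ks: "(\<Sum>k\<in>{1..d}. vh (int k) * s (1 + int k) + cnj (vh (int k)) * s (1 - int k)) = c * s 1"
      by (rule key[of s X]) (unfold s_def[abs_def] X'_def, rule refl)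
    have kr: "(\<Sum>k\<in>{1..d}. vh (int k) * r (1 + int k) + cnj (vh (int k)) * r (1 - int k)) = c * r 1"
      by (rule key[of r Y]) (unfold r_def[abs_def] Y'_def, rule refl)
    show ?thesis
      unfolding ks kr using cr by (simp add: algebra_simps)
  qed
  also have "\<dots> = omega X Y"
    unfolding O1 by (rule O3) (auto simp: s_def r_def)
  finally show ?thesis unfolding X'_def Y'_def .
qed

lemma omega_inv_iter: "omega (cocycle_iter (2*d) \<alpha> A n \<theta> X) (cocycle_iter (2*d) \<alpha> A n \<theta> Y) = omega X Y"
  by (induction n) (auto simp: omega_inv)

definition Cw where "Cw = (\<Sum>k\<in>{1..d}. \<Sum>j<k. 2 * cmod (vh (int k)))"

lemma omega_bound: "cmod (omega X Y) \<le> Cw * vnorm (2*d) X * vnorm (2*d) Y"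
proof -
  have "cmod (omega X Y) \<le> (\<Sum>k\<in>{1..d}. cmod (\<Sum>j<k. vh (int k) * X (d-k+j) * cnj (Y (d+j)) - cnj (vh (int k)) * cnj (Y (d-k+j)) * X (d+j)))"
    unfolding omega_def by (rule norm_sum)
  also have "\<dots> \<le> (\<Sum>k\<in>{1..d}. \<Sum>j<k. 2 * cmod (vh (int k)) * vnorm (2*d) X * vnorm (2*d) Y)"
  proof (rule sum_mono)
    fix k assume k: "k \<in> {1..d}"
    have "cmod (\<Sum>j<k. vh (int k) * X (d-k+j) * cnj (Y (d+j)) - cnj (vh (int k)) * cnj (Y (d-k+j)) * X (d+j))
       \<le> (\<Sum>j<k. cmod (vh (int k) * X (d-k+j) * cnj (Y (d+j)) - cnj (vh (int k)) * cnj (Y (d-k+j)) * X (d+j)))"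
      by (rule norm_sum)
    also have "\<dots> \<le> (\<Sum>j<k. 2 * cmod (vh (int k)) * vnorm (2*d) X * vnorm (2*d) Y)"
    proof (rule sum_mono)
      fix j assume j: "j \<in> {..<k}"
      have i1: "d-k+j < 2*d" "d+j < 2*d" using k j by auto
      have bX: "cmod (X (d-k+j)) \<le> vnorm (2*d) X" "cmod (X (d+j)) \<le> vnorm (2*d) X"
        using i1 by (auto intro: vnorm_comp_le)
      have bY: "cmod (Y (d-k+j)) \<le> vnorm (2*d) Y" "cmod (Y (d+j)) \<le> vnorm (2*d) Y"
        using i1 by (auto intro: vnorm_comp_le)
      have "cmod (vh (int k) * X (d-k+j) * cnj (Y (d+j)) - cnj (vh (int k)) * cnj (Y (d-k+j)) * X (d+j))
         \<le> cmod (vh (int k)) * cmod (X (d-k+j)) * cmod (Y (d+j)) + cmod (vh (int k)) * cmod (Y (d-k+j)) * cmod (X (d+j))"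
        by (rule order_trans[OF norm_triangle_ineq4]) (simp add: norm_mult)
      also have "\<dots> \<le> cmod (vh (int k)) * vnorm (2*d) X * vnorm (2*d) Y + cmod (vh (int k)) * vnorm (2*d) Y * vnorm (2*d) X"
        by (intro add_mono mult_mono bX bY mult_nonneg_nonneg) auto
      finally show "cmod (vh (int k) * X (d-k+j) * cnj (Y (d+j)) - cnj (vh (int k)) * cnj (Y (d-k+j)) * X (d+j))
         \<le> 2 * cmod (vh (int k)) * vnorm (2*d) X * vnorm (2*d) Y" by (simp add: algebra_simps)
    qed
    finally show "cmod (\<Sum>j<k. vh (int k) * X (d-k+j) * cnj (Y (d+j)) - cnj (vh (int k)) * cnj (Y (d-k+j)) * X (d+j))
       \<le> (\<Sum>j<k. 2 * cmod (vh (int k)) * vnorm (2*d) X * vnorm (2*d) Y)" .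
  qed
  also have "\<dots> = (\<Sum>k\<in>{1..d}. \<Sum>j<k. 2 * cmod (vh (int k))) * (vnorm (2*d) X * vnorm (2*d) Y)"
    by (simp only: sum_distrib_right mult.assoc)
  finally show ?thesis unfolding Cw_def by (simp add: mult.assoc)
qed

lemma Cw_nonneg: "Cw \<ge> 0" unfolding Cw_def by (auto intro: sum_nonneg)

end


lemma dep_exists:
  "finite I \<Longrightarrow> card I > n \<Longrightarrow> (\<forall>i\<in>I. V i \<in> cvec n) \<Longrightarrow>
    \<exists>c. (\<exists>i\<in>I. c i \<noteq> (0::complex)) \<and> (\<forall>t. (\<Sum>i\<in>I. c i * V i t) = 0)"
proof (induction n arbitrary: I V)
  case 0
  then have "I \<noteq> {}" by auto
  then obtain i where "i \<in> I" by auto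
  moreover have "V i t = 0" if "i \<in> I" for i t using 0 that by (auto simp: cvec_def)
  ultimately show ?case by (intro exI[of _ "\<lambda>i. 1"]) auto
next
  case (Suc n)
  show ?case
  proof (cases "\<forall>i\<in>I. V i n = 0")
    case True
    have "\<forall>i\<in>I. V i \<in> cvec n"
    proof (intro ballI cvecI)
      fix i t assume "i \<in> I" "n \<le> t"
      then show "V i t = 0" using True Suc.prems(3)
        by (cases "t = n") (auto simp: cvec_def)
    qed
    then show ?thesis using Suc.IH[of I V] Suc.prems by auto
  next
    case False
    then obtain i0 where i0: "i0 \<in> I" "V i0 n \<noteq> 0" by auto
    define I' where "I' = I - {i0}"
    define W where "W i = (\<lambda>t. V i t - (V i n / V i0 n) * V i0 t)" for i
    have fI': "finite I'" using Suc.prems by (simp add: I'_def)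
    have cI': "card I' > n" using Suc.prems i0 by (simp add: I'_def)
    have W: "\<forall>i\<in>I'. W i \<in> cvec n"
    proof
      fix i assume "i \<in> I'"
      then have Vi: "V i \<in> cvec (Suc n)" "V i0 \<in> cvec (Suc n)" using Suc.prems i0 by (auto simp: I'_def)
      show "W i \<in> cvec n"
      proof (rule cvecI)
        fix t assume "n \<le> t"
        then have "t = n \<or> t \<ge> Suc n" by auto
        then show "W i t = 0" using Vi i0 by (auto simp: W_def cvec_def)
      qed
    qed
    obtain c' where c': "\<exists>i\<in>I'. c' i \<noteq> 0" "\<And>t. (\<Sum>i\<in>I'. c' i * W i t) = 0"
      using Suc.IH[OF fI' cI' W] by auto
    define c where "c = c'(i0 := - (\<Sum>i\<in>I'. c' i * (V i n / V i0 n)))"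
    have "\<exists>i\<in>I. c i \<noteq> 0" using c'(1) by (auto simp: c_def I'_def)
    moreover have "(\<Sum>i\<in>I. c i * V i t) = 0" for t
    proof -
      have "(\<Sum>i\<in>I. c i * V i t) = c i0 * V i0 t + (\<Sum>i\<in>I'. c' i * V i t)"
        using Suc.prems(1) i0 by (simp add: I'_def c_def sum.remove)
      also have "(\<Sum>i\<in>I'. c' i * V i t) = (\<Sum>i\<in>I'. c' i * W i t + c' i * (V i n / V i0 n) * V i0 t)"
        by (rule sum.cong) (auto simp: W_def algebra_simps)
      also have "\<dots> = (\<Sum>i\<in>I'. c' i * W i t) + (\<Sum>i\<in>I'. c' i * (V i n / V i0 n)) * V i0 t"
        by (simp add: sum.distrib sum_distrib_right)
      finally show ?thesis using c'(2)[of t] by (simp add: c_def)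
    qed
    ultimately show ?thesis by blast
  qed
qed

context dual
begin

definition Rm :: "(nat \<Rightarrow> complex) \<Rightarrow> nat \<Rightarrow> complex" where
  "Rm Z = (\<lambda>j. if j < d then (\<Sum>k\<in>{Suc j..d}. vh (int k) * Z (d - k + j)) + \<i> * Z (d + j) else 0)"

lemma Rm_cvec: "Rm Z \<in> cvec d" by (auto simp: Rm_def cvec_def)

lemma Rm_sum: "Rm (\<lambda>t. \<Sum>i\<in>I. c i * X i t) j = (\<Sum>i\<in>I. c i * Rm (X i) j)"
proof (cases "j < d")
  case True
  have "(\<Sum>k\<in>{Suc j..d}. vh (int k) * (\<Sum>i\<in>I. c i * X i (d - k + j)))
     = (\<Sum>i\<in>I. c i * (\<Sum>k\<in>{Suc j..d}. vh (int k) * X i (d - k + j)))"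
  proof -
    have "(\<Sum>k\<in>{Suc j..d}. vh (int k) * (\<Sum>i\<in>I. c i * X i (d - k + j)))
       = (\<Sum>k\<in>{Suc j..d}. \<Sum>i\<in>I. c i * (vh (int k) * X i (d - k + j)))"
      by (simp add: sum_distrib_left mult_ac)
    also have "\<dots> = (\<Sum>i\<in>I. \<Sum>k\<in>{Suc j..d}. c i * (vh (int k) * X i (d - k + j)))"
      by (rule sum.swap)
    also have "\<dots> = (\<Sum>i\<in>I. c i * (\<Sum>k\<in>{Suc j..d}. vh (int k) * X i (d - k + j)))"
      by (simp add: sum_distrib_left)
    finally show ?thesis .
  qed
  then show ?thesis using True by (simp add: Rm_def sum_distrib_left algebra_simps sum.distrib)
qed (simp add: Rm_def)

lemma omega_swap: "omega X Y = (\<Sum>j<d. \<Sum>k\<in>{Suc j..d}. vh (int k) * X (d-k+j) * cnj (Y (d+j)) - cnj (vh (int k)) * cnj (Y (d-k+j)) * X (d+j))"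
proof -
  have a: "{..<k} = {j. j \<in> {..<d} \<and> j < k}" if "k \<in> {1..d}" for k using that by auto
  have b: "{Suc j..d} = {k. k \<in> {1..d} \<and> j < k}" if "j \<in> {..<d}" for j using that by auto
  define f where "f k j = vh (int k) * X (d-k+j) * cnj (Y (d+j)) - cnj (vh (int k)) * cnj (Y (d-k+j)) * X (d+j)" for k j
  have "(\<Sum>k\<in>{1..d}. \<Sum>j<k. f k j) = (\<Sum>k\<in>{1..d}. \<Sum>j\<in>{j. j \<in> {..<d} \<and> j < k}. f k j)"
    by (rule sum.cong[OF refl], rule sum.cong[OF a]) auto
  also have "\<dots> = (\<Sum>j\<in>{..<d}. \<Sum>k\<in>{k. k \<in> {1..d} \<and> j < k}. f k j)"
    by (rule sum.swap_restrict) auto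
  also have "\<dots> = (\<Sum>j<d. \<Sum>k\<in>{Suc j..d}. f k j)"
    by (rule sum.cong[OF refl], rule sum.cong[OF b[symmetric]]) auto
  finally show ?thesis unfolding omega_def f_def .
qed

lemma Rzero:
  assumes Z: "Z \<in> cvec (2*d)" and R: "Rm Z = (\<lambda>j. 0)" and O: "omega Z Z = 0"
  shows "Z = (\<lambda>i. 0)"
proof -
  define p where "p j = (\<Sum>k\<in>{Suc j..d}. vh (int k) * Z (d - k + j))" for j
  define q where "q j = Z (d + j)" for j
  have pq: "p j = - \<i> * q j" if "j < d" for j
    using fun_cong[OF R, of j] that by (simp add: Rm_def p_def q_def algebra_simps add_eq_0_iff)
  have "omega Z Z = (\<Sum>j<d. p j * cnj (q j) - cnj (p j) * q j)"
    unfolding omega_swap p_def q_def by (simp add: sum_distrib_right sum_subtractf)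
  also have "\<dots> = (\<Sum>j<d. - 2 * \<i> * complex_of_real ((cmod (q j))\<^sup>2))"
  proof (rule sum.cong[OF refl])
    fix j assume "j \<in> {..<d}"
    then have "p j = - \<i> * q j" by (intro pq) auto
    show "p j * cnj (q j) - cnj (p j) * q j = - 2 * \<i> * complex_of_real ((cmod (q j))\<^sup>2)"
    proof -
      have "q j * cnj (q j) = complex_of_real ((cmod (q j))\<^sup>2)"
        by (metis complex_norm_square of_real_power)
      moreover have "p j * cnj (q j) - cnj (p j) * q j = - 2 * \<i> * (q j * cnj (q j))"
        using \<open>p j = - \<i> * q j\<close> by (simp add: algebra_simps)
      ultimately show ?thesis by simp
    qed
  qed
  also have "\<dots> = - 2 * \<i> * complex_of_real (\<Sum>j<d. (cmod (q j))\<^sup>2)"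
    by (simp add: sum_distrib_left)
  finally have eq: "omega Z Z = - 2 * \<i> * complex_of_real (\<Sum>j<d. (cmod (q j))\<^sup>2)" .
  have "(- 2 * \<i>) * complex_of_real (\<Sum>j<d. (cmod (q j))\<^sup>2) = 0" using eq O by metis
  then have "complex_of_real (\<Sum>j<d. (cmod (q j))\<^sup>2) = 0"
    by (metis mult_eq_0_iff complex_i_not_zero neg_equal_0_iff_equal zero_neq_numeral)
  then have "(\<Sum>j<d. (cmod (q j))\<^sup>2) = 0" using of_real_eq_0_iff by blast
  then have q0: "q j = 0" if "j < d" for j
    using that by (subst (asm) sum_nonneg_eq_0_iff) auto
  have p0: "p j = 0" if "j < d" for j using pq[OF that] q0[OF that] by simp
  have low: "\<forall>i. n \<le> i \<and> i < d \<longrightarrow> Z i = 0" if "n \<le> d" for n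
    using that
  proof (induction n rule: inc_induct)
    case base then show ?case by auto
  next
    case (step n)
    have "Z n = 0"
    proof -
      have sp: "{Suc n..d} = insert d {Suc n..d-1}" using step by auto
      have "(\<Sum>k\<in>{Suc n..d-1}. vh (int k) * Z (d - k + n)) = 0"
      proof (intro sum.neutral ballI)
        fix k assume "k \<in> {Suc n..d-1}"
        then have "Suc n \<le> d - k + n" "d - k + n < d" by auto
        then show "vh (int k) * Z (d - k + n) = 0" using step.IH by auto
      qed
      moreover have "d \<notin> {Suc n..d-1}" using step by auto
      ultimately have "p n = vh (int d) * Z n" unfolding p_def sp by simp
      then show ?thesis using p0[of n] step vhd by simp
    qed
    then show ?case using step.IH by (metis Suc_leI le_neq_implies_less)
  qed
  show ?thesis
  proof
    fix i show "Z i = 0"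
    proof (cases "i < d")
      case True then show ?thesis using low[of 0] by auto
    next
      case False
      show ?thesis
      proof (cases "i < 2*d")
        case True
        then have "q (i - d) = 0" using False by (intro q0) auto
        then show ?thesis using False by (simp add: q_def)
      next
        case False then show ?thesis using Z by (auto simp: cvec_def)
      qed
    qed
  qed
qed

lemma isotropic_dep:
  assumes fin: "finite I" and card: "card I > d" and X: "\<forall>i\<in>I. X i \<in> cvec (2*d)"
    and iso: "\<And>c. omega (\<lambda>t. \<Sum>i\<in>I. c i * X i t) (\<lambda>t. \<Sum>i\<in>I. c i * X i t) = 0"
  shows "\<exists>c. (\<exists>i\<in>I. c i \<noteq> 0) \<and> (\<lambda>t. \<Sum>i\<in>I. c i * X i t) = (\<lambda>t. 0)"
proof -
  obtain c where c: "\<exists>i\<in>I. c i \<noteq> 0" "\<And>t. (\<Sum>i\<in>I. c i * Rm (X i) t) = 0"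
    using dep_exists[OF fin card, of "\<lambda>i. Rm (X i)"] Rm_cvec by auto
  define Z where "Z = (\<lambda>t. \<Sum>i\<in>I. c i * X i t)"
  have Zc: "Z \<in> cvec (2*d)" using X by (auto simp: Z_def cvec_def intro!: sum.neutral)
  have "Rm Z = (\<lambda>j. 0)" unfolding Z_def by (rule ext) (simp add: Rm_sum c(2))
  then have "Z = (\<lambda>i. 0)" using Rzero[OF Zc] iso[of c] by (simp add: Z_def)
  then show ?thesis using c(1) by (auto simp: Z_def)
qed

end


lemma periodic_int:
  assumes "\<And>x. f (x + 1) = f (x::real)"
  shows "f (x + of_int n) = f x"
proof (induction n rule: int_induct[where k=0])
  case base then show ?case by simp
next
  case (step1 i)
  then show ?case using assms[of "x + of_int i"] by (simp add: add.assoc)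
next
  case (step2 i)
  then show ?case using assms[of "x + of_int (i - 1)"] by (simp add: add.assoc)
qed

lemma periodic_frac:
  assumes "\<And>x. f (x + 1) = f (x::real)"
  shows "f x = f (x - of_int (floor x))"
  using periodic_int[of f "x - of_int (floor x)" "floor x", OF assms] by simp

locale dsplit = dual +
  fixes Ep Em :: "real \<Rightarrow> (nat \<Rightarrow> complex) set" and P :: "real \<Rightarrow> nat \<Rightarrow> nat \<Rightarrow> complex" and N :: nat
  assumes per: "\<And>\<theta>. Ep (\<theta> + 1) = Ep \<theta> \<and> Em (\<theta> + 1) = Em \<theta>"
    and dims: "\<And>\<theta>. subspace_dim (2*d) (Ep \<theta>) (d - 1) \<and> subspace_dim (2*d) (Em \<theta>) (2*d - (d - 1))"
    and dec: "\<And>\<theta>. \<forall>u\<in>cvec (2*d). \<exists>!p. fst p \<in> Ep \<theta> \<and> snd p \<in> Em \<theta> \<and> u = (\<lambda>i. fst p i + snd p i)"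
    and Pcont: "\<And>i j. i < 2*d \<Longrightarrow> j < 2*d \<Longrightarrow> continuous_on UNIV (\<lambda>\<theta>. P \<theta> i j)"
    and Pproj: "\<And>\<theta> u. u \<in> cvec (2*d) \<Longrightarrow> mvmult (2*d) (P \<theta>) u \<in> Ep \<theta> \<and>
                            (\<lambda>i. u i - mvmult (2*d) (P \<theta>) u i) \<in> Em \<theta>"
    and inv: "\<And>\<theta>. mvmult (2*d) (A \<theta>) ` Ep \<theta> = Ep (\<theta> + \<alpha>) \<and> mvmult (2*d) (A \<theta>) ` Em \<theta> = Em (\<theta> + \<alpha>)"
    and N1: "N \<ge> 1"
    and domN: "\<And>\<theta> u w. u \<in> Ep \<theta> \<Longrightarrow> w \<in> Em \<theta> \<Longrightarrow> vnorm (2*d) u = 1 \<Longrightarrow> vnorm (2*d) w = 1 \<Longrightarrow>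
          vnorm (2*d) (cocycle_iter (2*d) \<alpha> A N \<theta> u) > vnorm (2*d) (cocycle_iter (2*d) \<alpha> A N \<theta> w)"
begin

lemma Ep_sub: "subspace_dim (2*d) (Ep \<theta>) (d - 1)" using dims by blast
lemma Em_sub: "subspace_dim (2*d) (Em \<theta>) (d + 1)"
proof -
  have "2*d - (d - 1) = d + 1" using d1 by simp
  then show ?thesis using dims by metis
qed

lemma Ep_cvec: "x \<in> Ep \<theta> \<Longrightarrow> x \<in> cvec (2*d)" using subspace_cvec[OF Ep_sub] .
lemma Em_cvec: "x \<in> Em \<theta> \<Longrightarrow> x \<in> cvec (2*d)" using subspace_cvec[OF Em_sub] .

lemma uniq:
  assumes "x \<in> Ep \<theta>" "y \<in> Em \<theta>" "x' \<in> Ep \<theta>" "y' \<in> Em \<theta>"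
    and "(\<lambda>i. x i + y i) = (\<lambda>i. x' i + y' i)"
  shows "x = x' \<and> y = y'"
proof -
  have u: "(\<lambda>i. x i + y i) \<in> cvec (2*d)"
    using Ep_cvec[OF assms(1)] Em_cvec[OF assms(2)] by (auto simp: cvec_def)
  have ex1: "\<exists>!p. fst p \<in> Ep \<theta> \<and> snd p \<in> Em \<theta> \<and> (\<lambda>i. x i + y i) = (\<lambda>i. fst p i + snd p i)"
    using dec[of \<theta>] u by (rule bspec)
  show ?thesis
  proof (rule ex1E[OF ex1])
    fix p assume "fst p \<in> Ep \<theta> \<and> snd p \<in> Em \<theta> \<and> (\<lambda>i. x i + y i) = (\<lambda>i. fst p i + snd p i)"
      and all: "\<forall>q. fst q \<in> Ep \<theta> \<and> snd q \<in> Em \<theta> \<and> (\<lambda>i. x i + y i) = (\<lambda>i. fst q i + snd q i) \<longrightarrow> q = p"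
    have "(x, y) = p" using all assms(1,2) by simp
    moreover have "(x', y') = p" using all assms(3,4,5) by simp
    ultimately have "(x, y) = (x', y')" by simp
    then show ?thesis by simp
  qed
qed

lemma uniq0:
  assumes "x \<in> Ep \<theta>" "y \<in> Em \<theta>" "(\<lambda>i. x i + y i) = (\<lambda>i. 0)"
  shows "x = (\<lambda>i. 0) \<and> y = (\<lambda>i. 0)"
  using uniq[OF assms(1,2) subspace_zero[OF Ep_sub] subspace_zero[OF Em_sub]] assms(3) by simp

lemma P_on_Ep: "x \<in> Ep \<theta> \<Longrightarrow> y \<in> Em \<theta> \<Longrightarrow> mvmult (2*d) (P \<theta>) (\<lambda>i. x i + y i) = x"
proof -
  assume x: "x \<in> Ep \<theta>" and y: "y \<in> Em \<theta>"
  let ?u = "\<lambda>i. x i + y i"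
  have u: "?u \<in> cvec (2*d)" using Ep_cvec[OF x] Em_cvec[OF y] by (auto simp: cvec_def)
  define a where "a = mvmult (2*d) (P \<theta>) ?u"
  define b where "b = (\<lambda>i. ?u i - mvmult (2*d) (P \<theta>) ?u i)"
  have ab: "a \<in> Ep \<theta>" "b \<in> Em \<theta>" using Pproj[OF u] by (auto simp: a_def b_def)
  have "(\<lambda>i. a i + b i) = (\<lambda>i. x i + y i)" by (simp add: a_def b_def)
  from uniq[OF ab x y this] show ?thesis by (simp add: a_def)
qed

lemma iter_Ep: "x \<in> Ep \<theta> \<Longrightarrow> cocycle_iter (2*d) \<alpha> A n \<theta> x \<in> Ep (\<theta> + real n * \<alpha>)"
proof (induction n)
  case 0 then show ?case by simp
next
  case (Suc n)
  have e: "\<theta> + real (Suc n) * \<alpha> = (\<theta> + real n * \<alpha>) + \<alpha>" by (simp add: algebra_simps)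
  show ?case unfolding e using inv[of "\<theta> + real n * \<alpha>"] Suc by auto
qed

lemma iter_Em: "x \<in> Em \<theta> \<Longrightarrow> cocycle_iter (2*d) \<alpha> A n \<theta> x \<in> Em (\<theta> + real n * \<alpha>)"
proof (induction n)
  case 0 then show ?case by simp
next
  case (Suc n)
  have e: "\<theta> + real (Suc n) * \<alpha> = (\<theta> + real n * \<alpha>) + \<alpha>" by (simp add: algebra_simps)
  show ?case unfolding e using inv[of "\<theta> + real n * \<alpha>"] Suc by auto
qed

lemma iter_Ep_surj: "z \<in> Ep (\<theta> + real n * \<alpha>) \<Longrightarrow> \<exists>x\<in>Ep \<theta>. cocycle_iter (2*d) \<alpha> A n \<theta> x = z"
proof (induction n arbitrary: z)
  case 0 then show ?case by auto
next
  case (Suc n)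
  have e: "\<theta> + real (Suc n) * \<alpha> = (\<theta> + real n * \<alpha>) + \<alpha>" by (simp add: algebra_simps)
  from Suc.prems obtain y where "y \<in> Ep (\<theta> + real n * \<alpha>)" "z = mvmult (2*d) (A (\<theta> + real n * \<alpha>)) y"
    unfolding e using inv[of "\<theta> + real n * \<alpha>"] by (metis image_iff)
  then show ?case using Suc.IH by fastforce
qed

lemma P_comm: "u \<in> cvec (2*d) \<Longrightarrow>
   mvmult (2*d) (P (\<theta> + \<alpha>)) (mvmult (2*d) (A \<theta>) u) = mvmult (2*d) (A \<theta>) (mvmult (2*d) (P \<theta>) u)"
proof -
  assume u: "u \<in> cvec (2*d)"
  define x where "x = mvmult (2*d) (P \<theta>) u"
  define y where "y = (\<lambda>i. u i - mvmult (2*d) (P \<theta>) u i)"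
  have xy: "x \<in> Ep \<theta>" "y \<in> Em \<theta>" using Pproj[OF u] by (auto simp: x_def y_def)
  have "u = (\<lambda>i. x i + y i)" by (simp add: x_def y_def)
  then have "mvmult (2*d) (A \<theta>) u = (\<lambda>i. mvmult (2*d) (A \<theta>) x i + mvmult (2*d) (A \<theta>) y i)"
    by (metis mvmult_add)
  moreover have "mvmult (2*d) (A \<theta>) x \<in> Ep (\<theta> + \<alpha>)" "mvmult (2*d) (A \<theta>) y \<in> Em (\<theta> + \<alpha>)"
    using inv[of \<theta>] xy by auto
  ultimately show ?thesis using P_on_Ep by (simp add: x_def)
qed

lemma P_comm_iter: "u \<in> cvec (2*d) \<Longrightarrow>
   mvmult (2*d) (P (\<theta> + real n * \<alpha>)) (cocycle_iter (2*d) \<alpha> A n \<theta> u) = cocycle_iter (2*d) \<alpha> A n \<theta> (mvmult (2*d) (P \<theta>) u)"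
proof (induction n)
  case 0
  have "mvmult (2*d) (P \<theta>) u \<in> cvec (2*d)" by simp
  then show ?case by simp
next
  case (Suc n)
  have e: "\<theta> + real (Suc n) * \<alpha> = (\<theta> + real n * \<alpha>) + \<alpha>" by (simp add: algebra_simps)
  show ?case unfolding e cocycle_iter.simps
    using P_comm[where u="cocycle_iter (2*d) \<alpha> A n \<theta> u" and \<theta>="\<theta> + real n * \<alpha>"] iter_cvec[OF Suc.prems] Suc by simp
qed

lemma P_per_vec: "u \<in> cvec (2*d) \<Longrightarrow> mvmult (2*d) (P (\<theta> + 1)) u = mvmult (2*d) (P \<theta>) u"
proof -
  assume u: "u \<in> cvec (2*d)"
  define x where "x = mvmult (2*d) (P \<theta>) u"
  define y where "y = (\<lambda>i. u i - mvmult (2*d) (P \<theta>) u i)"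
  have xy: "x \<in> Ep (\<theta>+1)" "y \<in> Em (\<theta>+1)" using Pproj[OF u] per[of \<theta>] by (auto simp: x_def y_def)
  have "u = (\<lambda>i. x i + y i)" by (simp add: x_def y_def)
  then show ?thesis using P_on_Ep[OF xy] by (simp add: x_def)
qed

lemma mvmult_unit: "i < m \<Longrightarrow> j < m \<Longrightarrow> mvmult m M (\<lambda>t. if t = j then 1 else 0) i = M i j"
  by (simp add: mvmult_def if_distrib sum.delta cong: if_cong)

lemma P_per: "i < 2*d \<Longrightarrow> j < 2*d \<Longrightarrow> P (\<theta> + 1) i j = P \<theta> i j"
proof -
  assume ij: "i < 2*d" "j < 2*d"
  have "(\<lambda>t. if t = j then 1 else 0 :: complex) \<in> cvec (2*d)" using ij by (auto simp: cvec_def)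
  from P_per_vec[OF this, of \<theta>] have "mvmult (2*d) (P (\<theta> + 1)) (\<lambda>t. if t = j then 1 else 0) i = mvmult (2*d) (P \<theta>) (\<lambda>t. if t = j then 1 else 0) i"
    by simp
  then show ?thesis using mvmult_unit[OF ij] by metis
qed

lemma P_entry_bound: "\<exists>B. \<forall>\<theta> i j. i < 2*d \<longrightarrow> j < 2*d \<longrightarrow> cmod (P \<theta> i j) \<le> B"
proof -
  have ex: "\<exists>b. \<forall>\<theta>\<in>{0..1}. cmod (P \<theta> i j) \<le> b" if ij: "i < 2*d" "j < 2*d" for i j
  proof -
    have "continuous_on {0..1} (\<lambda>\<theta>. P \<theta> i j)" using Pcont[OF ij] continuous_on_subset by blast
    then have "compact ((\<lambda>\<theta>. P \<theta> i j) ` {0..1})" by (rule compact_continuous_image) simp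
    then have "bounded ((\<lambda>\<theta>. P \<theta> i j) ` {0..1})" by (rule compact_imp_bounded)
    then show ?thesis by (auto simp: bounded_iff)
  qed
  define b where "b i j = (SOME b. \<forall>\<theta>\<in>{0..1}. cmod (P \<theta> i j) \<le> b)" for i j
  have b: "cmod (P \<theta> i j) \<le> b i j" if "i < 2*d" "j < 2*d" "\<theta> \<in> {0..1}" for i j \<theta>
    using someI_ex[OF ex[OF that(1,2)]] that(3) unfolding b_def by blast
  define B where "B = (\<Sum>i<2*d. \<Sum>j<2*d. \<bar>b i j\<bar>)"
  have "cmod (P \<theta> i j) \<le> B" if ij: "i < 2*d" "j < 2*d" for \<theta> i j
  proof -
    have "P \<theta> i j = P (\<theta> - of_int (floor \<theta>)) i j"
      using periodic_frac[of "\<lambda>\<theta>. P \<theta> i j" \<theta>] P_per[OF ij] by simp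
    moreover have "\<theta> - of_int (floor \<theta>) \<in> {0..1}"
      using frac_ge_0[of \<theta>] frac_lt_1[of \<theta>] by (simp add: frac_def)
    ultimately have "cmod (P \<theta> i j) \<le> b i j" using b[OF ij] by simp
    also have "b i j \<le> \<bar>b i j\<bar>" by simp
    also have "\<bar>b i j\<bar> \<le> (\<Sum>j<2*d. \<bar>b i j\<bar>)" using ij by (intro member_le_sum) auto
    also have "\<dots> \<le> B" unfolding B_def using ij by (intro member_le_sum[where f="\<lambda>i. \<Sum>j<2*d. \<bar>b i j\<bar>"] sum_nonneg) auto
    finally show ?thesis .
  qed
  then show ?thesis by blast
qed

lemma P_bound: "\<exists>Mb\<ge>0. \<forall>\<theta> u. vnorm (2*d) (mvmult (2*d) (P \<theta>) u) \<le> Mb * vnorm (2*d) u"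
proof -
  obtain B where B: "\<And>\<theta> i j. i < 2*d \<Longrightarrow> j < 2*d \<Longrightarrow> cmod (P \<theta> i j) \<le> B" using P_entry_bound by blast
  have "0 < 2*d" using d1 by simp
  then have "cmod (P 0 0 0) \<le> B" by (intro B)
  then have B0: "B \<ge> 0" using norm_ge_zero order_trans by blast
  have "vnorm (2*d) (mvmult (2*d) (P \<theta>) u) \<le> (of_nat (2*d) * of_nat (2*d) * B) * vnorm (2*d) u" for \<theta> u
  proof -
    have "vnorm (2*d) (mvmult (2*d) (P \<theta>) u) \<le> (\<Sum>i<2*d. cmod (mvmult (2*d) (P \<theta>) u i))" by (rule vnorm_le_sum)
    also have "\<dots> \<le> (\<Sum>i<2*d. \<Sum>j<2*d. B * vnorm (2*d) u)"
    proof (rule sum_mono)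
      fix i assume i: "i \<in> {..<2*d}"
      have "cmod (mvmult (2*d) (P \<theta>) u i) = cmod (\<Sum>j<2*d. P \<theta> i j * u j)" using i by (simp add: mvmult_def)
      also have "\<dots> \<le> (\<Sum>j<2*d. cmod (P \<theta> i j * u j))" by (rule norm_sum)
      also have "\<dots> \<le> (\<Sum>j<2*d. B * vnorm (2*d) u)"
      proof (rule sum_mono)
        fix j assume j: "j \<in> {..<2*d}"
        have "cmod (P \<theta> i j) * cmod (u j) \<le> B * vnorm (2*d) u"
          by (rule mult_mono) (use i j B0 B vnorm_comp_le in auto)
        then show "cmod (P \<theta> i j * u j) \<le> B * vnorm (2*d) u" by (simp add: norm_mult)
      qed
      finally show "cmod (mvmult (2*d) (P \<theta>) u i) \<le> (\<Sum>j<2*d. B * vnorm (2*d) u)" .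
    qed
    also have "\<dots> = (of_nat (2*d) * of_nat (2*d) * B) * vnorm (2*d) u" by simp
    finally show ?thesis .
  qed
  moreover have "of_nat (2*d) * of_nat (2*d) * B \<ge> 0" using B0 by simp
  ultimately show ?thesis by blast
qed

end


context dsplit
begin

lemma mono_N:
  assumes u: "u \<in> Ep \<theta>" and w: "w \<in> Em \<theta>"
  shows "vnorm (2*d) (cocycle_iter (2*d) \<alpha> A N \<theta> w) * vnorm (2*d) u
       \<le> vnorm (2*d) (cocycle_iter (2*d) \<alpha> A N \<theta> u) * vnorm (2*d) w"
proof (cases "vnorm (2*d) u = 0 \<or> vnorm (2*d) w = 0")
  case True
  then show ?thesis
  proof
    assume "vnorm (2*d) u = 0" then show ?thesis by simp
  next
    assume "vnorm (2*d) w = 0"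
    then have "w = (\<lambda>i. 0)" using vnorm_zero_iff[OF Em_cvec[OF w]] by simp
    then show ?thesis by (simp add: vnorm_def)
  qed
next
  case False
  then have pu: "vnorm (2*d) u > 0" and pw: "vnorm (2*d) w > 0"
    using vnorm_nonneg[of "2*d"] by (auto simp: less_le)
  define u' where "u' = (\<lambda>i. complex_of_real (1 / vnorm (2*d) u) * u i)"
  define w' where "w' = (\<lambda>i. complex_of_real (1 / vnorm (2*d) w) * w i)"
  have "u' \<in> Ep \<theta>" unfolding u'_def by (rule subspace_scale[OF Ep_sub u])
  moreover have "w' \<in> Em \<theta>" unfolding w'_def by (rule subspace_scale[OF Em_sub w])
  moreover have "vnorm (2*d) u' = 1" unfolding u'_def vnorm_scale using pu by (simp add: norm_divide)
  moreover have "vnorm (2*d) w' = 1" unfolding w'_def vnorm_scale using pw by (simp add: norm_divide)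
  ultimately have "vnorm (2*d) (cocycle_iter (2*d) \<alpha> A N \<theta> w') < vnorm (2*d) (cocycle_iter (2*d) \<alpha> A N \<theta> u')"
    by (rule domN)
  then have "vnorm (2*d) (cocycle_iter (2*d) \<alpha> A N \<theta> w) / vnorm (2*d) w < vnorm (2*d) (cocycle_iter (2*d) \<alpha> A N \<theta> u) / vnorm (2*d) u"
    unfolding u'_def w'_def iter_scale vnorm_scale using pu pw by (simp add: norm_divide)
  then show ?thesis using pu pw by (simp add: field_simps)
qed

lemma mono_kN:
  "u \<in> Ep \<theta> \<Longrightarrow> w \<in> Em \<theta> \<Longrightarrow>
     vnorm (2*d) (cocycle_iter (2*d) \<alpha> A (k*N) \<theta> w) * vnorm (2*d) u
       \<le> vnorm (2*d) (cocycle_iter (2*d) \<alpha> A (k*N) \<theta> u) * vnorm (2*d) w"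
proof (induction k arbitrary: \<theta> u w)
  case 0 then show ?case by (simp add: mult.commute)
next
  case (Suc k)
  define u' where "u' = cocycle_iter (2*d) \<alpha> A N \<theta> u"
  define w' where "w' = cocycle_iter (2*d) \<alpha> A N \<theta> w"
  have u': "u' \<in> Ep (\<theta> + real N * \<alpha>)" unfolding u'_def by (rule iter_Ep[OF Suc.prems(1)])
  have w': "w' \<in> Em (\<theta> + real N * \<alpha>)" unfolding w'_def by (rule iter_Em[OF Suc.prems(2)])
  have eu: "cocycle_iter (2*d) \<alpha> A (Suc k * N) \<theta> u = cocycle_iter (2*d) \<alpha> A (k*N) (\<theta> + real N * \<alpha>) u'"
    unfolding u'_def using iter_compose[of "2*d" \<alpha> A N "k*N" \<theta> u] by (simp add: add.commute)
  have ew: "cocycle_iter (2*d) \<alpha> A (Suc k * N) \<theta> w = cocycle_iter (2*d) \<alpha> A (k*N) (\<theta> + real N * \<alpha>) w'"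
    unfolding w'_def using iter_compose[of "2*d" \<alpha> A N "k*N" \<theta> w] by (simp add: add.commute)
  define a where "a = vnorm (2*d) (cocycle_iter (2*d) \<alpha> A (k*N) (\<theta> + real N * \<alpha>) w')"
  define c where "c = vnorm (2*d) (cocycle_iter (2*d) \<alpha> A (k*N) (\<theta> + real N * \<alpha>) u')"
  define b where "b = vnorm (2*d) u'"
  define e where "e = vnorm (2*d) w'"
  define f where "f = vnorm (2*d) u"
  define g where "g = vnorm (2*d) w"
  have IH: "a * b \<le> c * e" using Suc.IH[OF u' w'] by (simp add: a_def b_def c_def e_def)
  have base: "e * f \<le> b * g" using mono_N[OF Suc.prems] by (simp add: b_def e_def f_def g_def u'_def w'_def)
  have nn: "a \<ge> 0" "b \<ge> 0" "c \<ge> 0" "e \<ge> 0" "f \<ge> 0" "g \<ge> 0" by (simp_all add: a_def b_def c_def e_def f_def g_def)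
  have "a * f \<le> c * g"
  proof (cases "b = 0")
    case True
    then have "u' = (\<lambda>i. 0)" using vnorm_zero_iff[OF Ep_cvec[OF u']] by (simp add: b_def)
    then have "u = (\<lambda>i. 0)" using iter_inj[OF Ep_cvec[OF Suc.prems(1)]] by (simp add: u'_def)
    then have "f = 0" by (simp add: f_def vnorm_def)
    then show ?thesis using nn by simp
  next
    case False
    then have bp: "b > 0" using nn by simp
    have "b * (a * f) = (a * b) * f" by simp
    also have "\<dots> \<le> (c * e) * f" using IH nn by (intro mult_right_mono) auto
    also have "\<dots> = c * (e * f)" by simp
    also have "\<dots> \<le> c * (b * g)" using base nn by (intro mult_left_mono) auto
    also have "\<dots> = b * (c * g)" by simp
    finally show ?thesis using bp by simp
  qed
  then show ?case unfolding eu ew by (simp add: a_def c_def f_def g_def)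
qed

lemma omega_small:
  assumes "\<And>\<epsilon>. \<epsilon> > 0 \<Longrightarrow> \<exists>V. omega Z Z = omega V V \<and> vnorm (2*d) V < \<epsilon>"
  shows "omega Z Z = 0"
proof (rule ccontr)
  assume nz: "omega Z Z \<noteq> 0"
  define \<delta> where "\<delta> = cmod (omega Z Z)"
  have dp: "\<delta> > 0" using nz by (simp add: \<delta>_def)
  define \<epsilon> where "\<epsilon> = min 1 (\<delta> / (Cw + 1))"
  have ep: "\<epsilon> > 0" using dp Cw_nonneg by (simp add: \<epsilon>_def)
  obtain V where V: "omega Z Z = omega V V" "vnorm (2*d) V < \<epsilon>" using assms[OF ep] by blast
  have "\<delta> \<le> Cw * vnorm (2*d) V * vnorm (2*d) V" unfolding \<delta>_def V(1) by (rule omega_bound)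
  also have "\<dots> \<le> Cw * \<epsilon> * \<epsilon>"
    using V(2) Cw_nonneg ep by (intro mult_mono) (auto intro: mult_left_mono)
  also have "\<dots> \<le> Cw * \<epsilon> * 1"
    using Cw_nonneg ep by (intro mult_left_mono) (auto simp: \<epsilon>_def)
  also have "\<dots> = Cw * \<epsilon>" by simp
  also have "\<dots> < \<delta>"
  proof -
    have "Cw * \<epsilon> \<le> Cw * (\<delta> / (Cw + 1))" using Cw_nonneg by (intro mult_left_mono) (auto simp: \<epsilon>_def)
    also have "\<dots> < \<delta>" using dp Cw_nonneg by (simp add: field_simps)
    finally show ?thesis .
  qed
  finally show False by simp
qed

end


context dsplit
begin

lemma recur_lin:
  assumes "recur u n" "recur w n"
  shows "recur (\<lambda>t. x * u t + y * w t) n"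
proof -
  let ?c = "complex_of_real (2 * cos (2*pi*(of_int n * \<alpha>)))"
  have s: "(\<Sum>k\<in>{-int d..int d}. vh k * (x * u (n+k) + y * w (n+k))) =
     x * (\<Sum>k\<in>{-int d..int d}. vh k * u (n+k)) + y * (\<Sum>k\<in>{-int d..int d}. vh k * w (n+k))"
    by (simp add: algebra_simps sum.distrib sum_distrib_left)
  have "x * ((\<Sum>k\<in>{-int d..int d}. vh k * u (n+k)) + ?c * u n) + y * ((\<Sum>k\<in>{-int d..int d}. vh k * w (n+k)) + ?c * w n)
     = x * (complex_of_real E * u n) + y * (complex_of_real E * w n)"
    using assms unfolding recur_def by simp
  then show ?thesis unfolding recur_def s by (simp add: algebra_simps)
qed

lemma vecof_lin: "vecof (\<lambda>t. x * u t + y * w t) n = (\<lambda>i. x * vecof u n i + y * vecof w n i)"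
  by (auto simp: vecof_def)

lemma vecof_zero_all:
  assumes r: "\<And>n. recur z n" and z0: "vecof z 0 = (\<lambda>i. 0)"
  shows "vecof z n = (\<lambda>i. 0)"
proof (induction n rule: int_induct[where k=0])
  case base then show ?case by (rule z0)
next
  case (step1 i)
  then show ?case using step[OF r, of i] by simp
next
  case (step2 i)
  have "mvmult (2*d) (A (of_int (i - 1) * \<alpha>)) (vecof z (i - 1)) = vecof z i"
    using step[OF r, of "i - 1"] by simp
  then show ?case using A_inj[OF vecof_cvec] step2 by simp
qed

lemma vec_indep:
  assumes ru: "\<And>n. recur u n" and rw: "\<And>n. recur w n"
    and indep: "\<And>x y. (\<forall>n. x * u n + y * w n = 0) \<Longrightarrow> x = 0 \<and> y = 0"
    and z: "(\<lambda>i. x * vecof u 0 i + y * vecof w 0 i) = (\<lambda>i. 0)"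
  shows "x = 0 \<and> y = 0"
proof -
  define z where "z = (\<lambda>t. x * u t + y * w t)"
  have rz: "\<And>n. recur z n" unfolding z_def using ru rw by (rule recur_lin)
  have "vecof z 0 = (\<lambda>i. 0)" unfolding z_def vecof_lin by (rule z)
  then have all: "\<And>n. vecof z n = (\<lambda>i. 0)" using vecof_zero_all[OF rz] by blast
  have "z t = 0" for t
  proof -
    have "vecof z (t - int d + 1) 0 = z t" using d1 by (simp add: vecof_def)
    then show ?thesis using all by simp
  qed
  then show ?thesis using indep unfolding z_def by blast
qed

lemma vec_decay:
  assumes du: "\<forall>\<epsilon>>0. \<exists>M. \<forall>n. \<bar>n\<bar> \<ge> M \<longrightarrow> cmod (u n) < \<epsilon>"
  shows "\<forall>\<epsilon>>0. \<exists>M. \<forall>n. \<bar>n\<bar> \<ge> M \<longrightarrow> vnorm (2*d) (vecof u n) < \<epsilon>"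
proof (intro allI impI)
  fix \<epsilon> :: real assume ep: "\<epsilon> > 0"
  define \<eta> where "\<eta> = \<epsilon> / real (2*d)"
  have eta: "\<eta> > 0" using ep d1 by (simp add: \<eta>_def)
  obtain M0 where M0: "\<And>n. \<bar>n\<bar> \<ge> M0 \<Longrightarrow> cmod (u n) < \<eta>" using du eta by blast
  have "vnorm (2*d) (vecof u n) < \<epsilon>" if n: "\<bar>n\<bar> \<ge> M0 + 2 * int d" for n
  proof -
    have "vnorm (2*d) (vecof u n) \<le> (\<Sum>i<2*d. cmod (vecof u n i))" by (rule vnorm_le_sum)
    also have "\<dots> < (\<Sum>i<2*d. \<eta>)"
    proof (rule sum_strict_mono)
      have "0 \<in> {..<2*d}" using d1 by simp
      then show "{..<2*d} \<noteq> {}" by blast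
      fix i assume i: "i \<in> {..<2*d}"
      have "\<bar>n + int d - 1 - int i\<bar> \<ge> M0" using n i by auto
      then show "cmod (vecof u n i) < \<eta>" using i M0 by (simp add: vecof_def)
    qed simp
    also have "\<dots> = \<epsilon>" using d1 by (simp add: \<eta>_def)
    finally show ?thesis .
  qed
  then show "\<exists>M. \<forall>n. \<bar>n\<bar> \<ge> M \<longrightarrow> vnorm (2*d) (vecof u n) < \<epsilon>" by blast
qed

lemma pick_k:
  assumes "\<forall>\<epsilon>>0. \<exists>M. \<forall>n. \<bar>n\<bar> \<ge> M \<longrightarrow> f n < (\<epsilon>::real)" and "\<epsilon> > 0"
  shows "\<exists>k0. \<forall>k\<ge>k0. f (int (k*N)) < \<epsilon> \<and> f (- int (k*N)) < \<epsilon>"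
proof -
  obtain M where M: "\<And>n. \<bar>n\<bar> \<ge> M \<Longrightarrow> f n < \<epsilon>" using assms by blast
  have "f (int (k*N)) < \<epsilon> \<and> f (- int (k*N)) < \<epsilon>" if "k \<ge> nat M" for k
  proof -
    have "k * N \<ge> k" using N1 by simp
    then have "int (k*N) \<ge> M" using that by linarith
    then show ?thesis using M by auto
  qed
  then show ?thesis by blast
qed

end


context dsplit
begin

lemma caseA:
  assumes rs: "\<And>n. recur s n" and ds: "\<forall>\<epsilon>>0. \<exists>M. \<forall>n. \<bar>n\<bar> \<ge> M \<longrightarrow> cmod (s n) < \<epsilon>"
    and Ynz: "mvmult (2*d) (P 0) (vecof s 0) \<noteq> (\<lambda>i. 0)"
  shows False
proof -
  define Y where "Y = mvmult (2*d) (P 0) (vecof s 0)"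
  have Y: "Y \<in> Ep 0" using Pproj[OF vecof_cvec] by (simp add: Y_def)
  have vY: "vnorm (2*d) Y > 0"
    using vnorm_zero_iff[OF Ep_cvec[OF Y]] Ynz vnorm_nonneg[of "2*d" Y] by (auto simp: Y_def less_le)
  obtain Mb where Mb: "Mb \<ge> 0" "\<And>\<theta> u. vnorm (2*d) (mvmult (2*d) (P \<theta>) u) \<le> Mb * vnorm (2*d) u"
    using P_bound by blast
  have iterY: "cocycle_iter (2*d) \<alpha> A n 0 Y = mvmult (2*d) (P (real n * \<alpha>)) (vecof s (int n))" for n
  proof -
    have "cocycle_iter (2*d) \<alpha> A n (of_int 0 * \<alpha>) (vecof s 0) = vecof s (0 + int n)" by (rule step_iter[OF rs])
    then have e: "cocycle_iter (2*d) \<alpha> A n 0 (vecof s 0) = vecof s (int n)" by simp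
    show ?thesis using P_comm_iter[OF vecof_cvec, of 0 n s 0] unfolding e Y_def by simp
  qed
  have bY: "vnorm (2*d) (cocycle_iter (2*d) \<alpha> A n 0 Y) \<le> Mb * vnorm (2*d) (vecof s (int n))" for n
    unfolding iterY by (rule Mb(2))
  have dvs: "\<forall>\<epsilon>>0. \<exists>M. \<forall>n. \<bar>n\<bar> \<ge> M \<longrightarrow> vnorm (2*d) (vecof s n) < \<epsilon>" by (rule vec_decay[OF ds])
  obtain b where b: "\<forall>j<d+1. b j \<in> Em 0" "\<forall>c. lincomb (d+1) b c = (\<lambda>i. 0) \<longrightarrow> (\<forall>j<d+1. c j = 0)"
    "Em 0 = {lincomb (d+1) b c | c. True}"
    using Em_sub[of 0] unfolding subspace_dim_def by blast
  have iso: "omega (lincomb (d+1) b c) (lincomb (d+1) b c) = 0" for c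
  proof (rule omega_small)
    fix \<epsilon> :: real assume ep: "\<epsilon> > 0"
    define Z where "Z = lincomb (d+1) b c"
    have Z: "Z \<in> Em 0" using b(3) by (auto simp: Z_def)
    define \<eta> where "\<eta> = \<epsilon> * vnorm (2*d) Y / ((Mb + 1) * (vnorm (2*d) Z + 1))"
    have "(Mb + 1) * (vnorm (2*d) Z + 1) > 0" using Mb(1) vnorm_nonneg[of "2*d" Z] by (intro mult_pos_pos) linarith+
    then have eta: "\<eta> > 0" unfolding \<eta>_def by (rule divide_pos_pos[OF mult_pos_pos[OF ep vY]])
    obtain k0 where k0: "\<And>k. k \<ge> k0 \<Longrightarrow> vnorm (2*d) (vecof s (int (k*N))) < \<eta>"
      using pick_k[OF dvs eta] by blast
    define V where "V = cocycle_iter (2*d) \<alpha> A (k0*N) 0 Z"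
    have "omega Z Z = omega V V" unfolding V_def by (simp add: omega_inv_iter)
    moreover have "vnorm (2*d) V < \<epsilon>"
    proof -
      define e where "e = vnorm (2*d) (vecof s (int (k0*N)))"
      have e: "e < \<eta>" "e \<ge> 0" using k0[of k0] by (auto simp: e_def)
      have "vnorm (2*d) V * vnorm (2*d) Y \<le> vnorm (2*d) (cocycle_iter (2*d) \<alpha> A (k0*N) 0 Y) * vnorm (2*d) Z"
        unfolding V_def by (rule mono_kN[OF Y Z])
      also have "\<dots> \<le> (Mb * e) * vnorm (2*d) Z"
        using bY[of "k0*N"] by (intro mult_right_mono) (auto simp: e_def)
      also have "\<dots> \<le> ((Mb + 1) * e) * (vnorm (2*d) Z + 1)"
        using Mb(1) e by (intro mult_mono) auto
      also have "\<dots> < ((Mb + 1) * \<eta>) * (vnorm (2*d) Z + 1)"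
      proof -
        have zp: "vnorm (2*d) Z + 1 > 0" using vnorm_nonneg[of "2*d" Z] by linarith
        have "(Mb + 1) * e < (Mb + 1) * \<eta>" using Mb(1) e by (intro mult_strict_left_mono) auto
        then show ?thesis using zp by (rule mult_strict_right_mono)
      qed
      also have "\<dots> = \<epsilon> * vnorm (2*d) Y"
      proof -
        have "(Mb + 1) * (vnorm (2*d) Z + 1) \<noteq> 0" using Mb(1) vnorm_nonneg[of "2*d" Z]
          by (metis add_nonneg_pos mult_eq_0_iff zero_less_one not_less_iff_gr_or_eq)
        then show ?thesis unfolding \<eta>_def by (simp add: field_simps)
      qed
      finally show ?thesis using vY by simp
    qed
    ultimately show "\<exists>V. omega (lincomb (d+1) b c) (lincomb (d+1) b c) = omega V V \<and> vnorm (2*d) V < \<epsilon>"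
      unfolding Z_def by blast
  qed
  have "\<exists>c. (\<exists>i\<in>{..<d+1}. c i \<noteq> 0) \<and> (\<lambda>t. \<Sum>i\<in>{..<d+1}. c i * b i t) = (\<lambda>t. 0)"
  proof (rule isotropic_dep)
    show "\<forall>i\<in>{..<d+1}. b i \<in> cvec (2*d)" using b(1) Em_cvec by blast
    show "omega (\<lambda>t. \<Sum>i\<in>{..<d+1}. c i * b i t) (\<lambda>t. \<Sum>i\<in>{..<d+1}. c i * b i t) = 0" for c
      using iso[of c] by (simp add: lincomb_def)
  qed auto
  then obtain c where c: "\<exists>i\<in>{..<d+1}. c i \<noteq> 0" "lincomb (d+1) b c = (\<lambda>t. 0)"
    by (auto simp: lincomb_def)
  then show False using b(2) by auto
qed

end


context dsplit
begin

lemma back_Em: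
  assumes rs: "\<And>n. recur s n" and s0: "vecof s 0 \<in> Em 0"
  shows "vecof s (- int (k*N)) \<in> Em (of_int (- int (k*N)) * \<alpha>)"
proof -
  define \<theta>k where "\<theta>k = of_int (- int (k*N)) * \<alpha>"
  define v where "v = vecof s (- int (k*N))"
  have th: "\<theta>k + real (k*N) * \<alpha> = 0" by (simp add: \<theta>k_def)
  have it: "cocycle_iter (2*d) \<alpha> A (k*N) \<theta>k v = vecof s 0"
    using step_iter[OF rs, of "k*N" "- int (k*N)"] by (simp add: \<theta>k_def v_def)
  define p where "p = mvmult (2*d) (P \<theta>k) v"
  define r where "r = (\<lambda>i. v i - mvmult (2*d) (P \<theta>k) v i)"
  have pr: "p \<in> Ep \<theta>k" "r \<in> Em \<theta>k" using Pproj[of v \<theta>k] by (auto simp: p_def r_def v_def)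
  have vpr: "v = (\<lambda>i. p i + r i)" by (simp add: p_def r_def)
  have ip: "cocycle_iter (2*d) \<alpha> A (k*N) \<theta>k p \<in> Ep 0" using iter_Ep[OF pr(1), of "k*N"] th by simp
  have ir: "cocycle_iter (2*d) \<alpha> A (k*N) \<theta>k r \<in> Em 0" using iter_Em[OF pr(2), of "k*N"] th by simp
  have "(\<lambda>i. cocycle_iter (2*d) \<alpha> A (k*N) \<theta>k p i + cocycle_iter (2*d) \<alpha> A (k*N) \<theta>k r i)
      = (\<lambda>i. (\<lambda>i. 0) i + vecof s 0 i)"
    using it unfolding vpr iter_add by simp
  from uniq[OF ip ir subspace_zero[OF Ep_sub] s0 this]
  have "cocycle_iter (2*d) \<alpha> A (k*N) \<theta>k p = (\<lambda>i. 0)" by simp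
  then have "p = (\<lambda>i. 0)" using iter_inj[OF Ep_cvec[OF pr(1)]] by blast
  then have "v = r" using vpr by simp
  then show ?thesis using pr(2) by (simp add: v_def \<theta>k_def)
qed

end


context dsplit
begin

lemma caseB:
  assumes ru: "\<And>n. recur u n" and rw: "\<And>n. recur w n"
    and du: "\<forall>\<epsilon>>0. \<exists>M. \<forall>n. \<bar>n\<bar> \<ge> M \<longrightarrow> cmod (u n) < \<epsilon>"
    and dw: "\<forall>\<epsilon>>0. \<exists>M. \<forall>n. \<bar>n\<bar> \<ge> M \<longrightarrow> cmod (w n) < \<epsilon>"
    and indep: "\<And>x y. (\<forall>n. x * u n + y * w n = 0) \<Longrightarrow> x = 0 \<and> y = 0"
    and Pa: "mvmult (2*d) (P 0) (vecof u 0) = (\<lambda>i. 0)"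
    and Pb: "mvmult (2*d) (P 0) (vecof w 0) = (\<lambda>i. 0)"
  shows False
proof -
  let ?Ua = "vecof u 0" and ?Ub = "vecof w 0"
  have Ua: "?Ua \<in> Em 0" using Pproj[OF vecof_cvec, of 0 u 0] Pa by simp
  have Ub: "?Ub \<in> Em 0" using Pproj[OF vecof_cvec, of 0 w 0] Pb by simp
  have vi: "x = 0 \<and> y = 0" if "(\<lambda>i. x * ?Ua i + y * ?Ub i) = (\<lambda>i. 0)" for x y
    by (rule vec_indep[OF ru rw indep that])
  have Ua0: "?Ua \<noteq> (\<lambda>i. 0)"
  proof
    assume "?Ua = (\<lambda>i. 0)"
    then have "(\<lambda>i. 1 * ?Ua i + 0 * ?Ub i) = (\<lambda>i. 0)" by (simp add: fun_eq_iff)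
    from vi[OF this] show False by simp
  qed
  have vUa: "vnorm (2*d) ?Ua > 0"
    using vnorm_zero_iff[OF vecof_cvec, of u 0] Ua0 vnorm_nonneg[of "2*d" ?Ua] by (auto simp: less_le)
  have dvu: "\<forall>\<epsilon>>0. \<exists>M. \<forall>n. \<bar>n\<bar> \<ge> M \<longrightarrow> vnorm (2*d) (vecof u n) < \<epsilon>" by (rule vec_decay[OF du])
  have dvw: "\<forall>\<epsilon>>0. \<exists>M. \<forall>n. \<bar>n\<bar> \<ge> M \<longrightarrow> vnorm (2*d) (vecof w n) < \<epsilon>" by (rule vec_decay[OF dw])
  obtain b where b: "\<forall>j<d-1. b j \<in> Ep 0" "\<forall>c. lincomb (d-1) b c = (\<lambda>i. 0) \<longrightarrow> (\<forall>j<d-1. c j = 0)"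
    "Ep 0 = {lincomb (d-1) b c | c. True}"
    using Ep_sub[of 0] unfolding subspace_dim_def by blast
  define X where "X i = (if i < d-1 then b i else if i = d-1 then ?Ua else ?Ub)" for i
  have dd: "d + 1 = Suc (Suc (d-1))" "Suc (d-1) = d" using d1 by auto
  have sumX: "(\<lambda>t. \<Sum>i\<in>{..<d+1}. c i * X i t) = (\<lambda>t. lincomb (d-1) b c t + (c (d-1) * ?Ua t + c d * ?Ub t))" for c
  proof
    fix t
    have "(\<Sum>i\<in>{..<d+1}. c i * X i t) = (\<Sum>i<d-1. c i * X i t) + c (d-1) * X (d-1) t + c d * X d t"
    proof -
      have "(\<Sum>i\<in>{..<d+1}. c i * X i t) = (\<Sum>i<Suc (Suc (d-1)). c i * X i t)" by (simp only: dd(1))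
      also have "\<dots> = (\<Sum>i<d-1. c i * X i t) + c (d-1) * X (d-1) t + c (Suc (d-1)) * X (Suc (d-1)) t"
        by (simp only: sum.lessThan_Suc)
      finally show ?thesis by (simp only: dd(2))
    qed
    moreover have "(\<Sum>i<d-1. c i * X i t) = lincomb (d-1) b c t"
      unfolding lincomb_def by (rule sum.cong) (auto simp: X_def)
    moreover have "X (d-1) = ?Ua" "X d = ?Ub" using d1 by (auto simp: X_def)
    ultimately show "(\<Sum>i\<in>{..<d+1}. c i * X i t) = lincomb (d-1) b c t + (c (d-1) * ?Ua t + c d * ?Ub t)"
      by (simp add: add.assoc)
  qed
  have iso: "omega Z Z = 0" if Z: "Z = (\<lambda>t. lincomb (d-1) b c t + (c1 * ?Ua t + c2 * ?Ub t))" for c c1 c2 Z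
  proof (rule omega_small)
    fix \<epsilon> :: real assume ep: "\<epsilon> > 0"
    define z where "z = lincomb (d-1) b c"
    have z: "z \<in> Ep 0" using b(3) by (auto simp: z_def)
    define K where "K = vnorm (2*d) z / vnorm (2*d) ?Ua + cmod c1 + cmod c2"
    have K0: "K \<ge> 0" using vUa by (simp add: K_def)
    define \<eta> where "\<eta> = \<epsilon> / (K + 1)"
    have eta: "\<eta> > 0" using ep K0 by (simp add: \<eta>_def)
    obtain ka where ka: "\<And>k. k \<ge> ka \<Longrightarrow> vnorm (2*d) (vecof u (- int (k*N))) < \<eta>"
      using pick_k[OF dvu eta] by blast
    obtain kb where kb: "\<And>k. k \<ge> kb \<Longrightarrow> vnorm (2*d) (vecof w (- int (k*N))) < \<eta>"
      using pick_k[OF dvw eta] by blast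
    define k where "k = max ka kb"
    define \<theta>k where "\<theta>k = of_int (- int (k*N)) * \<alpha>"
    have th: "\<theta>k + real (k*N) * \<alpha> = 0" by (simp add: \<theta>k_def)
    define a where "a = vecof u (- int (k*N))"
    define a' where "a' = vecof w (- int (k*N))"
    have av: "vnorm (2*d) a < \<eta>" "vnorm (2*d) a' < \<eta>" using ka kb by (auto simp: a_def a'_def k_def)
    have aE: "a \<in> Em \<theta>k" using back_Em[OF ru Ua] by (simp add: a_def \<theta>k_def)
    have ia: "cocycle_iter (2*d) \<alpha> A (k*N) \<theta>k a = ?Ua"
      using step_iter[OF ru, of "k*N" "- int (k*N)"] by (simp add: \<theta>k_def a_def)
    have ia': "cocycle_iter (2*d) \<alpha> A (k*N) \<theta>k a' = ?Ub"
      using step_iter[OF rw, of "k*N" "- int (k*N)"] by (simp add: \<theta>k_def a'_def)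
    have "z \<in> Ep (\<theta>k + real (k*N) * \<alpha>)" using z th by simp
    then obtain zk where zk: "zk \<in> Ep \<theta>k" "cocycle_iter (2*d) \<alpha> A (k*N) \<theta>k zk = z"
      using iter_Ep_surj by blast
    define V where "V = (\<lambda>i. zk i + (c1 * a i + c2 * a' i))"
    have "cocycle_iter (2*d) \<alpha> A (k*N) \<theta>k V = Z"
      unfolding V_def iter_add iter_scale zk(2) ia ia' Z z_def ..
    then have "omega Z Z = omega V V" using omega_inv_iter[of "k*N" \<theta>k V V] by simp
    moreover have "vnorm (2*d) V < \<epsilon>"
    proof -
      have m: "vnorm (2*d) ?Ua * vnorm (2*d) zk \<le> vnorm (2*d) z * vnorm (2*d) a"
        using mono_kN[OF zk(1) aE, of k] unfolding ia zk(2) .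
      have zkb: "vnorm (2*d) zk \<le> (vnorm (2*d) z / vnorm (2*d) ?Ua) * vnorm (2*d) a"
        using m vUa by (simp add: field_simps)
      have "vnorm (2*d) V \<le> vnorm (2*d) zk + vnorm (2*d) (\<lambda>i. c1 * a i + c2 * a' i)"
        unfolding V_def by (rule vnorm_triangle)
      also have "vnorm (2*d) (\<lambda>i. c1 * a i + c2 * a' i) \<le> vnorm (2*d) (\<lambda>i. c1 * a i) + vnorm (2*d) (\<lambda>i. c2 * a' i)"
        by (rule vnorm_triangle)
      also have "vnorm (2*d) (\<lambda>i. c1 * a i) = cmod c1 * vnorm (2*d) a" by (rule vnorm_scale)
      also have "vnorm (2*d) (\<lambda>i. c2 * a' i) = cmod c2 * vnorm (2*d) a'" by (rule vnorm_scale)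
      finally have "vnorm (2*d) V \<le> (vnorm (2*d) z / vnorm (2*d) ?Ua) * vnorm (2*d) a + cmod c1 * vnorm (2*d) a + cmod c2 * vnorm (2*d) a'"
        using zkb by simp
      also have "\<dots> \<le> (vnorm (2*d) z / vnorm (2*d) ?Ua) * \<eta> + cmod c1 * \<eta> + cmod c2 * \<eta>"
        using av vUa by (intro add_mono mult_left_mono) auto
      also have "\<dots> = K * \<eta>" by (simp add: K_def algebra_simps)
      also have "\<dots> < \<epsilon>" using K0 ep by (simp add: \<eta>_def field_simps)
      finally show ?thesis .
    qed
    ultimately show "\<exists>V. omega Z Z = omega V V \<and> vnorm (2*d) V < \<epsilon>" by blast
  qed
  have "\<exists>c. (\<exists>i\<in>{..<d+1}. c i \<noteq> 0) \<and> (\<lambda>t. \<Sum>i\<in>{..<d+1}. c i * X i t) = (\<lambda>t. 0)"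
  proof (rule isotropic_dep)
    show "\<forall>i\<in>{..<d+1}. X i \<in> cvec (2*d)" using b(1) Ep_cvec by (auto simp: X_def)
    show "omega (\<lambda>t. \<Sum>i\<in>{..<d+1}. c i * X i t) (\<lambda>t. \<Sum>i\<in>{..<d+1}. c i * X i t) = 0" for c
      unfolding sumX by (rule iso) (rule refl)
  qed auto
  then obtain c where c: "\<exists>i\<in>{..<d+1}. c i \<noteq> 0"
    "(\<lambda>t. lincomb (d-1) b c t + (c (d-1) * ?Ua t + c d * ?Ub t)) = (\<lambda>t. 0)"
    unfolding sumX by blast
  have zE: "lincomb (d-1) b c \<in> Ep 0" using b(3) by auto
  have rE: "(\<lambda>t. c (d-1) * ?Ua t + c d * ?Ub t) \<in> Em 0"
    using subspace_add[OF Em_sub subspace_scale[OF Em_sub Ua] subspace_scale[OF Em_sub Ub]] .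
  from uniq0[OF zE rE c(2)]
  have z0: "lincomb (d-1) b c = (\<lambda>i. 0)" and r0: "(\<lambda>t. c (d-1) * ?Ua t + c d * ?Ub t) = (\<lambda>i. 0)" by auto
  have "c (d-1) = 0 \<and> c d = 0" using vi[OF r0] .
  moreover have "\<forall>j<d-1. c j = 0" using b(2) z0 by blast
  ultimately have "\<forall>i<d+1. c i = 0" by (metis dd(1) dd(2) less_Suc_eq)
  then show False using c(1) by auto
qed

lemma main_contra:
  assumes ru: "\<And>n. recur u n" and rw: "\<And>n. recur w n"
    and du: "\<forall>\<epsilon>>0. \<exists>M. \<forall>n. \<bar>n\<bar> \<ge> M \<longrightarrow> cmod (u n) < \<epsilon>"
    and dw: "\<forall>\<epsilon>>0. \<exists>M. \<forall>n. \<bar>n\<bar> \<ge> M \<longrightarrow> cmod (w n) < \<epsilon>"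
    and indep: "\<And>x y. (\<forall>n. x * u n + y * w n = 0) \<Longrightarrow> x = 0 \<and> y = 0"
  shows False
proof (cases "mvmult (2*d) (P 0) (vecof u 0) = (\<lambda>i. 0)")
  case False then show False by (rule caseA[OF ru du])
next
  case a: True
  show False
  proof (cases "mvmult (2*d) (P 0) (vecof w 0) = (\<lambda>i. 0)")
    case False then show False by (rule caseA[OF rw dw])
  next
    case True then show False using caseB[OF ru rw du dw indep a] by blast
  qed
qed

end


definition ex :: "int \<Rightarrow> real \<Rightarrow> complex" where
  "ex k x = exp (2 * pi * \<i> * of_int k * of_real x)"

definition fc :: "(real \<Rightarrow> complex) \<Rightarrow> int \<Rightarrow> complex" where
  "fc f m = integral {0..1} (\<lambda>x. f x * ex (-m) x)"

definition cper :: "(real \<Rightarrow> complex) \<Rightarrow> bool" where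
  "cper f \<longleftrightarrow> continuous_on UNIV f \<and> (\<forall>x. f (x + 1) = f x)"

lemma ex_cis: "ex k x = cis (2 * pi * of_int k * x)"
  by (simp add: ex_def cis_conv_exp mult_ac)

lemma ex_add: "ex k (x + y) = ex k x * ex k y"
  by (simp add: ex_def algebra_simps exp_add[symmetric])

lemma ex_mult: "ex k x * ex j x = ex (k + j) x"
  by (simp add: ex_def algebra_simps exp_add[symmetric])

lemma ex_zero[simp]: "ex 0 x = 1" by (simp add: ex_def)

lemma ex_one: "ex k 1 = 1"
proof -
  have "cis (2 * pi * of_int k) = 1" by (rule cis_multiple_2pi) simp
  then show ?thesis by (simp add: ex_cis)
qed

lemma ex_per: "ex k (x + 1) = ex k x"
  by (simp add: ex_add ex_one)

lemma ex_cnj: "cnj (ex k x) = ex (-k) x"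
  by (simp add: ex_cis cis_cnj)

lemma ex_neg: "ex k (- x) = ex (-k) x" by (simp add: ex_def)

lemma cont_ex[continuous_intros]: "continuous_on S (ex k)"
  unfolding ex_def by (intro continuous_intros)

lemma ex_norm[simp]: "cmod (ex k x) = 1" by (simp add: ex_cis)

lemma cper_ex: "cper (ex k)" by (simp add: cper_def cont_ex ex_per)

lemma cper_mult: "cper f \<Longrightarrow> cper g \<Longrightarrow> cper (\<lambda>x. f x * g x)"
  by (auto simp: cper_def intro: continuous_on_mult)

lemma cper_add: "cper f \<Longrightarrow> cper g \<Longrightarrow> cper (\<lambda>x. f x + g x)"
  by (auto simp: cper_def intro: continuous_on_add)

lemma cper_scale: "cper f \<Longrightarrow> cper (\<lambda>x. c * f x)"
  by (auto simp: cper_def intro: continuous_on_mult continuous_on_const)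

lemma cper_shift: "cper f \<Longrightarrow> cper (\<lambda>x. f (x + c))"
proof -
  assume f: "cper f"
  have "continuous_on UNIV (\<lambda>x. f (x + c))"
    using f unfolding cper_def
    by (intro continuous_on_compose2[of UNIV f UNIV "\<lambda>x. x + c"]) (auto intro: continuous_intros)
  then show ?thesis using f by (simp add: cper_def add_ac) (metis add.assoc add.commute)
qed

lemma cper_integrable: "cper f \<Longrightarrow> f integrable_on {a..b}"
  unfolding cper_def by (auto intro: integrable_continuous_interval continuous_on_subset)

lemma cper_int_shift: "cper f \<Longrightarrow> f (x + of_int n) = f x"
proof (induction n rule: int_induct[where k=0])
  case base then show ?case by simp
next
  case (step1 i)
  then show ?case unfolding cper_def by (metis add.assoc of_int_add of_int_1)
next
  case (step2 i)
  then show ?case unfolding cper_def by (metis diff_add_cancel add.assoc of_int_diff of_int_1)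
qed

lemma shift01:
  assumes f: "cper f" and c: "0 \<le> c" "c \<le> 1"
  shows "integral {0..1} (\<lambda>x. f (x + c)) = integral {0..1} f"
proof -
  have "integral {0..1} (\<lambda>x. f (x + c)) = integral {0..1} (f \<circ> ((+) c))" by (simp add: o_def add.commute)
  also have "\<dots> = integral {c..1+c} f" using integral_shift_Icc_real[of 0 1 f c] by simp
  also have "\<dots> = integral {c..1} f + integral {1..1+c} f"
    using Henstock_Kurzweil_Integration.integral_combine[where a=c and c=1 and b="1+c" and f=f] c cper_integrable[OF f] by simp
  also have "integral {1..1+c} f = integral {0..c} f"
  proof -
    have "integral {0..c} (f \<circ> ((+) 1)) = integral {0+1..c+1} f" by (rule integral_shift_Icc_real)
    moreover have "f \<circ> ((+) 1) = f" using f by (auto simp: cper_def o_def add.commute)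
    ultimately show ?thesis by (simp add: add.commute)
  qed
  also have "integral {c..1} f + integral {0..c} f = integral {0..1} f"
    using Henstock_Kurzweil_Integration.integral_combine[where a=0 and c=c and b=1 and f=f] c cper_integrable[OF f] by (simp add: add.commute)
  finally show ?thesis .
qed

lemma shift_inv:
  assumes f: "cper f"
  shows "integral {0..1} (\<lambda>x. f (x + c)) = integral {0..1} f"
proof -
  have "f (x + c) = f (x + frac c)" for x
    using cper_int_shift[OF f, of "x + frac c" "floor c"] by (simp add: frac_def algebra_simps)
  then have "integral {0..1} (\<lambda>x. f (x + c)) = integral {0..1} (\<lambda>x. f (x + frac c))" by simp
  also have "\<dots> = integral {0..1} f"
    using shift01[OF f, of "frac c"] frac_ge_0[of c] frac_lt_1[of c] by simp
  finally show ?thesis .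
qed

lemma int_ex: "integral {0..1} (ex k) = (if k = 0 then 1 else 0)"
proof (cases "k = 0")
  case True
  have "ex 0 = (\<lambda>x. 1)" by (rule ext) simp
  then show ?thesis using True by simp
next
  case False
  define c where "c = 1 / (2 * real_of_int k)"
  have "ex k c = cis pi" using False by (simp add: ex_cis c_def)
  then have ec: "ex k c = -1" by simp
  have "integral {0..1} (ex k) = integral {0..1} (\<lambda>x. ex k (x + c))"
    using shift_inv[OF cper_ex, of k c] by simp
  also have "\<dots> = integral {0..1} (\<lambda>x. ex k x * (-1))" by (simp add: ex_add ec)
  also have "\<dots> = - integral {0..1} (ex k)" by simp
  finally show ?thesis using False by simp
qed

lemma fc_shift:
  assumes f: "cper f"
  shows "fc (\<lambda>x. f (x + c)) m = ex m c * fc f m"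
proof -
  have "(\<lambda>x. f (x + c) * ex (-m) x) = (\<lambda>x. ex m c * (f (x + c) * ex (-m) (x + c)))"
    by (auto simp: ex_add ex_mult fun_eq_iff mult_ac)
  then have "fc (\<lambda>x. f (x + c)) m = ex m c * integral {0..1} (\<lambda>x. f (x + c) * ex (-m) (x + c))"
    by (simp add: fc_def)
  also have "integral {0..1} (\<lambda>x. f (x + c) * ex (-m) (x + c)) = fc f m"
    unfolding fc_def using shift_inv[OF cper_mult[OF f cper_ex], of c] .
  finally show ?thesis .
qed

lemma fc_mult_ex: "fc (\<lambda>x. ex k x * f x) m = fc f (m - k)"
  unfolding fc_def by (rule arg_cong[where f="integral _"]) (auto simp: fun_eq_iff mult_ac ex_mult[symmetric, of k] ex_mult)

lemma fc_add: "cper f \<Longrightarrow> cper g \<Longrightarrow> fc (\<lambda>x. f x + g x) m = fc f m + fc g m"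
  unfolding fc_def using cper_integrable[OF cper_mult[OF _ cper_ex]]
  by (simp add: distrib_right integral_add)

lemma fc_scale: "fc (\<lambda>x. c * f x) m = c * fc f m"
  unfolding fc_def by (simp add: mult.assoc)

lemma fc_sum: "finite K \<Longrightarrow> (\<And>k. k \<in> K \<Longrightarrow> cper (g k)) \<Longrightarrow> fc (\<lambda>x. \<Sum>k\<in>K. g k x) m = (\<Sum>k\<in>K. fc (g k) m)"
  unfolding fc_def using cper_integrable[OF cper_mult[OF _ cper_ex]]
  by (simp add: sum_distrib_right integral_sum)



lemma unif_cont_cper:
  assumes f: "cper f" and e: "\<epsilon> > 0"
  shows "\<exists>\<delta>>0. \<forall>x y. \<bar>x - y\<bar> < \<delta> \<longrightarrow> cmod (f x - f y) < \<epsilon>"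
proof -
  have "uniformly_continuous_on {-1..2} f"
    using f unfolding cper_def by (intro compact_uniformly_continuous) (auto intro: continuous_on_subset)
  then obtain d where d: "d > 0" "\<And>x x'. x \<in> {-1..2} \<Longrightarrow> x' \<in> {-1..2} \<Longrightarrow> dist x' x < d \<Longrightarrow> dist (f x') (f x) < \<epsilon>"
    unfolding uniformly_continuous_on_def using e by metis
  define \<delta> where "\<delta> = min d 1"
  have "cmod (f x - f y) < \<epsilon>" if xy: "\<bar>x - y\<bar> < \<delta>" for x y
  proof -
    define n where "n = floor x"
    have fx: "f x = f (x - of_int n)" using cper_int_shift[OF f, of "x - of_int n" n] by simp
    have fy: "f y = f (y - of_int n)" using cper_int_shift[OF f, of "y - of_int n" n] by simp
    have x0: "0 \<le> x - of_int n" "x - of_int n < 1" using floor_correct[of x] by (simp_all add: n_def) linarith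
    have x': "x - of_int n \<in> {-1..2}" using x0 by auto
    have "\<bar>x - y\<bar> < 1" using xy by (simp add: \<delta>_def)
    then have y': "y - of_int n \<in> {-1..2}" using x0 by auto
    have "dist (x - of_int n) (y - of_int n) < d" using xy by (simp add: dist_real_def \<delta>_def)
    from d(2)[OF y' x' this] show ?thesis by (simp add: fx fy dist_norm)
  qed
  moreover have "\<delta> > 0" using d by (simp add: \<delta>_def)
  ultimately show ?thesis by blast
qed

lemma riemann_lebesgue:
  assumes f: "cper f"
  shows "\<forall>\<epsilon>>0. \<exists>M. \<forall>m. \<bar>m\<bar> \<ge> M \<longrightarrow> cmod (fc f m) < \<epsilon>"
proof (intro allI impI)
  fix \<epsilon> :: real assume e: "\<epsilon> > 0"
  obtain \<delta> where \<delta>: "\<delta> > 0" "\<And>x y. \<bar>x - y\<bar> < \<delta> \<Longrightarrow> cmod (f x - f y) < \<epsilon>"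
    using unif_cont_cper[OF f e] by blast
  define M where "M = ceiling (1 / \<delta>) + 1"
  have "cmod (fc f m) < \<epsilon>" if m: "\<bar>m\<bar> \<ge> M" for m
  proof -
    have M1: "real_of_int M > 1 / \<delta>" unfolding M_def by linarith
    have "1 / \<delta> > 0" using \<delta> by simp
    then have mpos: "real_of_int \<bar>m\<bar> > 1 / \<delta>" using m M1 by linarith
    then have m0: "m \<noteq> 0" using \<delta> by auto
    define c where "c = 1 / (2 * real_of_int m)"
    have cd: "\<bar>c\<bar> < \<delta>"
    proof -
      have "\<bar>c\<bar> = 1 / (2 * real_of_int \<bar>m\<bar>)" by (simp add: c_def abs_mult)
      also have "\<dots> \<le> 1 / real_of_int \<bar>m\<bar>" using m0 by (simp add: divide_simps)
      also have "\<dots> < \<delta>" using mpos \<delta>(1) m0 by (simp add: field_simps)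
      finally show ?thesis .
    qed
    have "ex m c = cis pi" using m0 by (simp add: ex_cis c_def)
    then have ec: "ex m c = -1" by simp
    have sh: "fc (\<lambda>x. f (x + c)) m = - fc f m" using fc_shift[OF f, of c m] ec by simp
    have int1: "(\<lambda>x. f x * ex (-m) x) integrable_on {0..1}" by (rule cper_integrable[OF cper_mult[OF f cper_ex]])
    have int2: "(\<lambda>x. f (x + c) * ex (-m) x) integrable_on {0..1}" by (rule cper_integrable[OF cper_mult[OF cper_shift[OF f] cper_ex]])
    have "2 * fc f m = fc f m - fc (\<lambda>x. f (x + c)) m" using sh by simp
    also have "\<dots> = integral {0..1} (\<lambda>x. (f x - f (x + c)) * ex (-m) x)"
      unfolding fc_def using integral_diff[OF int1 int2] by (simp add: algebra_simps)
    finally have eq: "2 * fc f m = integral {0..1} (\<lambda>x. (f x - f (x + c)) * ex (-m) x)" .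
    have "cmod (integral {0..1} (\<lambda>x. (f x - f (x + c)) * ex (-m) x)) \<le> \<epsilon> * (1 - 0)"
    proof (rule integral_bound)
      show "continuous_on {0..1} (\<lambda>x. (f x - f (x + c)) * ex (-m) x)"
      proof -
        have "cper (\<lambda>x. (f x + (-1) * f (x + c)) * ex (-m) x)"
          by (rule cper_mult[OF cper_add[OF f cper_scale[OF cper_shift[OF f, of c]]] cper_ex])
        then show ?thesis unfolding cper_def by (auto intro: continuous_on_subset)
      qed
      fix t assume "t \<in> {0..1::real}"
      have "cmod (f t - f (t + c)) < \<epsilon>" using \<delta>(2)[of t "t + c"] cd by simp
      then show "cmod ((f t - f (t + c)) * ex (-m) t) \<le> \<epsilon>" by (simp add: norm_mult)
    qed simp
    then have "cmod (2 * fc f m) \<le> \<epsilon>" using eq by simp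
    then show ?thesis using e by (simp add: norm_mult)
  qed
  then show "\<exists>M. \<forall>m. \<bar>m\<bar> \<ge> M \<longrightarrow> cmod (fc f m) < \<epsilon>" by blast
qed



inductive tp :: "(real \<Rightarrow> complex) \<Rightarrow> bool" where
  tp_ex: "tp (\<lambda>x. c * ex k x)"
| tp_add: "tp f \<Longrightarrow> tp g \<Longrightarrow> tp (\<lambda>x. f x + g x)"

lemma tp_cper: "tp f \<Longrightarrow> cper f"
  by (induction rule: tp.induct) (auto intro: cper_add cper_scale cper_ex)

lemma tp_const: "tp (\<lambda>x. c)"
  using tp_ex[of c 0] by simp

lemma tp_mult_single: "tp f \<Longrightarrow> tp (\<lambda>x. (c * ex k x) * f x)"
proof (induction rule: tp.induct)
  case (tp_ex c' k')
  have "(\<lambda>x. (c * ex k x) * (c' * ex k' x)) = (\<lambda>x. (c * c') * ex (k + k') x)"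
    by (auto simp: fun_eq_iff ex_mult[symmetric] mult_ac)
  then show ?case using tp.tp_ex by metis
next
  case (tp_add f g)
  have "(\<lambda>x. (c * ex k x) * (f x + g x)) = (\<lambda>x. (c * ex k x) * f x + (c * ex k x) * g x)"
    by (auto simp: fun_eq_iff algebra_simps)
  then show ?case using tp.tp_add[OF tp_add.IH] by metis
qed

lemma tp_mult: "tp f \<Longrightarrow> tp g \<Longrightarrow> tp (\<lambda>x. f x * g x)"
proof (induction rule: tp.induct)
  case (tp_ex c k) then show ?case by (rule tp_mult_single)
next
  case (tp_add f1 f2)
  have "(\<lambda>x. (f1 x + f2 x) * g x) = (\<lambda>x. f1 x * g x + f2 x * g x)"
    by (auto simp: fun_eq_iff algebra_simps)
  then show ?case using tp.tp_add[OF tp_add.IH(1)[OF tp_add.prems] tp_add.IH(2)[OF tp_add.prems]] by metis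
qed

lemma tp_orth:
  assumes h: "cper h" and z: "\<And>m. fc h m = 0"
  shows "tp f \<Longrightarrow> integral {0..1} (\<lambda>x. h x * f x) = 0"
proof (induction rule: tp.induct)
  case (tp_ex c k)
  have "integral {0..1} (\<lambda>x. h x * (c * ex k x)) = c * fc h (-k)"
    unfolding fc_def by (simp add: mult_ac)
  then show ?case using z by simp
next
  case (tp_add f g)
  have i1: "(\<lambda>x. h x * f x) integrable_on {0..1}" using cper_integrable[OF cper_mult[OF h tp_cper[OF tp_add.hyps(1)]]] .
  have i2: "(\<lambda>x. h x * g x) integrable_on {0..1}" using cper_integrable[OF cper_mult[OF h tp_cper[OF tp_add.hyps(2)]]] .
  have "integral {0..1} (\<lambda>x. h x * (f x + g x)) = integral {0..1} (\<lambda>x. h x * f x + h x * g x)"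
    by (simp add: algebra_simps)
  also have "\<dots> = 0" using integral_add[OF i1 i2] tp_add.IH by simp
  finally show ?case .
qed

lemma blin_decomp:
  assumes "bounded_linear (p :: complex \<Rightarrow> real)"
  shows "p z = p 1 * Re z + p \<i> * Im z"
proof -
  interpret bounded_linear p by (rule assms)
  have "z = Re z *\<^sub>R 1 + Im z *\<^sub>R \<i>" by (simp add: complex_eq_iff)
  then have "p z = p (Re z *\<^sub>R 1 + Im z *\<^sub>R \<i>)" by simp
  also have "\<dots> = Re z * p 1 + Im z * p \<i>" by (simp add: add scaleR)
  finally show ?thesis by simp
qed

lemma tp_poly:
  "real_polynomial_function p \<Longrightarrow> tp (\<lambda>x. complex_of_real (p (ex 1 x)))"
proof (induction rule: real_polynomial_function.induct)
  case (linear p)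
  define P1 where "P1 = complex_of_real (p 1) / 2"
  define Q where "Q = complex_of_real (p \<i>) / (2 * \<i>)"
  define A where "A = P1 + Q"
  define B where "B = P1 - Q"
  have "complex_of_real (p z) = A * z + B * cnj z" for z
  proof -
    have e1: "A * z + B * cnj z = P1 * (z + cnj z) + Q * (z - cnj z)"
      unfolding A_def B_def by (simp add: algebra_simps)
    have e2: "P1 * (z + cnj z) = complex_of_real (p 1 * Re z)"
      unfolding complex_add_cnj P1_def by simp
    have e3: "Q * (z - cnj z) = complex_of_real (p \<i> * Im z)"
    proof -
      have "Q * (z - cnj z) = complex_of_real (p \<i>) * complex_of_real (Im z) * (\<i> / \<i>)"
        unfolding complex_diff_cnj Q_def by (simp add: field_simps)
      then show ?thesis by simp
    qed
    show ?thesis unfolding e1 e2 e3 using blin_decomp[OF linear, of z] by simp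
  qed
  then have "(\<lambda>x. complex_of_real (p (ex 1 x))) = (\<lambda>x. A * ex 1 x + B * ex (-1) x)"
    by (simp add: ex_cnj)
  then show ?case using tp_add[OF tp_ex tp_ex] by metis
next
  case (const c) then show ?case by (rule tp_const)
next
  case (add f g) then show ?case using tp_add by (simp add: of_real_add)
next
  case (mult f g) then show ?case using tp_mult by (simp add: of_real_mult)
qed



lemma ex1_eq: "ex 1 s = ex 1 t \<Longrightarrow> \<exists>n::int. s = t + of_int n"
proof -
  assume "ex 1 s = ex 1 t"
  then have "exp (2 * pi * \<i> * complex_of_real s) = exp (2 * pi * \<i> * complex_of_real t)" by (simp add: ex_def)
  then obtain n :: int where n: "2 * pi * \<i> * complex_of_real s = 2 * pi * \<i> * complex_of_real t + (of_int (2 * n) * pi) * \<i>"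
    unfolding exp_eq by blast
  then have "Im (2 * pi * \<i> * complex_of_real s) = Im (2 * pi * \<i> * complex_of_real t + (of_int (2 * n) * pi) * \<i>)" by simp
  then have "2 * pi * s = 2 * pi * t + 2 * of_int n * pi" by simp
  then have "(2 * pi) * s = (2 * pi) * (t + of_int n)" by (simp add: algebra_simps)
  then have "s = t + of_int n" by (simp only: mult_cancel_left) simp
  then show ?thesis by blast
qed

lemma ex1_onto: "cmod z = 1 \<Longrightarrow> \<exists>t\<in>{0..1}. ex 1 t = z"
proof -
  assume z: "cmod z = 1"
  define t where "t = Arg2pi z / (2 * pi)"
  have a: "0 \<le> Arg2pi z" "Arg2pi z < 2 * pi" "z = of_real (cmod z) * exp (\<i> * of_real (Arg2pi z))"
    using Arg2pi[of z] by (auto simp: is_Arg_def)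
  have "t \<in> {0..1}" using a by (simp add: t_def)
  moreover have "ex 1 t = z"
    using a(3) z by (simp add: ex_def t_def mult_ac)
  ultimately show ?thesis by blast
qed

definition Hc :: "(real \<Rightarrow> complex) \<Rightarrow> complex \<Rightarrow> complex" where
  "Hc h z = h (SOME t. ex 1 t = z)"

lemma Hc_ex: "cper h \<Longrightarrow> Hc h (ex 1 s) = h s"
proof -
  assume h: "cper h"
  have "ex 1 (SOME t. ex 1 t = ex 1 s) = ex 1 s" by (rule someI_ex) blast
  then obtain n :: int where "(SOME t. ex 1 t = ex 1 s) = s + of_int n" using ex1_eq by blast
  then show ?thesis unfolding Hc_def using cper_int_shift[OF h] by simp
qed

lemma ex1_image: "ex 1 ` {0..1} = sphere 0 1"
proof
  show "ex 1 ` {0..1} \<subseteq> sphere 0 1" by auto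
  show "sphere 0 1 \<subseteq> ex 1 ` {0..1}"
  proof
    fix z :: complex assume "z \<in> sphere 0 1"
    then have "cmod z = 1" by simp
    then obtain t where "t \<in> {0..1}" "ex 1 t = z" using ex1_onto by blast
    then show "z \<in> ex 1 ` {0..1}" by (auto intro: image_eqI[of _ _ t])
  qed
qed

lemma Hc_cont:
  assumes h: "cper h"
  shows "continuous_on (sphere 0 1) (Hc h)"
  unfolding continuous_openin_preimage_eq
proof (intro allI impI)
  fix B :: "complex set" assume B: "open B"
  define U where "U = sphere 0 1 \<inter> Hc h -` B"
  have q: "openin (top_of_set {0..1}) ({0..1} \<inter> ex 1 -` U) \<longleftrightarrow> openin (top_of_set (sphere 0 1)) U"
    by (rule Abstract_Topology_2.continuous_imp_quotient_map[OF cont_ex ex1_image]) (auto simp: U_def)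
  have "{0..1} \<inter> ex 1 -` U = {0..1} \<inter> h -` B"
    using ex1_image Hc_ex[OF h] by (auto simp: U_def)
  moreover have "openin (top_of_set {0..1}) ({0..1} \<inter> h -` B)"
  proof -
    have "continuous_on {0..1} h" using h unfolding cper_def by (meson continuous_on_subset subset_UNIV)
    then show ?thesis using B unfolding continuous_openin_preimage_eq by blast
  qed
  ultimately show "openin (top_of_set (sphere 0 1)) (sphere 0 1 \<inter> Hc h -` B)"
    using q by (simp add: U_def)
qed



lemma approx_tp:
  assumes h: "cper h" and e: "\<epsilon> > 0"
  shows "\<exists>P. tp P \<and> (\<forall>x. cmod (cnj (h x) - P x) \<le> 2 * \<epsilon>)"
proof -
  define S where "S = sphere (0::complex) 1"
  have cH: "continuous_on S (Hc h)" unfolding S_def by (rule Hc_cont[OF h])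
  have c1: "continuous_on S (\<lambda>z. Re (cnj (Hc h z)))"
    by (intro continuous_intros cH)
  have c2: "continuous_on S (\<lambda>z. Im (cnj (Hc h z)))"
    by (intro continuous_intros cH)
  have sep: "\<exists>f. real_polynomial_function f \<and> f x \<noteq> f y" if "x \<in> S \<and> y \<in> S \<and> x \<noteq> y" for x y
  proof (cases "Re x = Re y")
    case True
    then have "Im x \<noteq> Im y" using that complex_eq_iff by blast
    moreover have "real_polynomial_function Im" using bounded_linear_Im by (rule real_polynomial_function.intros(1))
    ultimately show ?thesis by blast
  next
    case False
    moreover have "real_polynomial_function Re" using bounded_linear_Re by (rule real_polynomial_function.intros(1))
    ultimately show ?thesis by blast
  qed
  have SW: "\<exists>g. real_polynomial_function g \<and> (\<forall>x\<in>S. \<bar>f x - g x\<bar> < \<epsilon>)" if "continuous_on S f" for f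
  proof (rule Stone_Weierstrass_HOL[where P=real_polynomial_function])
    show "compact S" unfolding S_def by simp
    show "real_polynomial_function f \<Longrightarrow> continuous_on S f" for f
      by (meson continuous_at_imp_continuous_on continuous_real_polymonial_function)
  qed (use that e sep in auto)
  obtain g1 where g1: "real_polynomial_function g1" "\<And>x. x \<in> S \<Longrightarrow> \<bar>Re (cnj (Hc h x)) - g1 x\<bar> < \<epsilon>"
    using SW[OF c1] by blast
  obtain g2 where g2: "real_polynomial_function g2" "\<And>x. x \<in> S \<Longrightarrow> \<bar>Im (cnj (Hc h x)) - g2 x\<bar> < \<epsilon>"
    using SW[OF c2] by blast
  define P where "P x = complex_of_real (g1 (ex 1 x)) + \<i> * complex_of_real (g2 (ex 1 x))" for x
  have "tp P" unfolding P_def by (intro tp_add tp_poly g1(1) tp_mult[OF tp_const] g2(1))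
  moreover have "cmod (cnj (h x) - P x) \<le> 2 * \<epsilon>" for x
  proof -
    have z: "ex 1 x \<in> S" by (simp add: S_def)
    have hx: "cnj (h x) = cnj (Hc h (ex 1 x))" using Hc_ex[OF h] by simp
    define a where "a = Re (cnj (Hc h (ex 1 x))) - g1 (ex 1 x)"
    define b where "b = Im (cnj (Hc h (ex 1 x))) - g2 (ex 1 x)"
    have "cnj (h x) - P x = complex_of_real a + \<i> * complex_of_real b"
      unfolding hx P_def a_def b_def by (simp add: complex_eq_iff)
    then have "cmod (cnj (h x) - P x) \<le> cmod (complex_of_real a) + cmod (\<i> * complex_of_real b)"
      by (metis norm_triangle_ineq)
    also have "\<dots> = \<bar>a\<bar> + \<bar>b\<bar>" by (simp add: norm_mult)
    also have "\<dots> \<le> 2 * \<epsilon>" using g1(2)[OF z] g2(2)[OF z] by (simp add: a_def b_def)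
    finally show ?thesis .
  qed
  ultimately show ?thesis by blast
qed

lemma cper_cnj: "cper h \<Longrightarrow> cper (\<lambda>x. cnj (h x))"
  by (auto simp: cper_def intro: continuous_on_cnj)

lemma fourier_unique:
  assumes h: "cper h" and z: "\<And>m. fc h m = 0"
  shows "h x = 0"
proof -
  have "compact (h ` {0..1})" using h unfolding cper_def
    by (intro compact_continuous_image) (auto intro: continuous_on_subset)
  then obtain Bh where Bh: "\<And>x. x \<in> {0..1} \<Longrightarrow> cmod (h x) \<le> Bh"
    using compact_imp_bounded bounded_iff by (metis imageI)
  have Bh0: "Bh \<ge> 0" using Bh[of 0] by (meson atLeastAtMost_iff norm_ge_zero order_trans zero_le_one order_refl)
  define I where "I = integral {0..1} (\<lambda>x. h x * cnj (h x))"
  have small: "cmod I \<le> 2 * Bh * \<epsilon>" if e: "\<epsilon> > 0" for \<epsilon>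
  proof -
    obtain P where P: "tp P" "\<And>x. cmod (cnj (h x) - P x) \<le> 2 * \<epsilon>" using approx_tp[OF h e] by blast
    have i1: "(\<lambda>x. h x * cnj (h x)) integrable_on {0..1}" by (rule cper_integrable[OF cper_mult[OF h cper_cnj[OF h]]])
    have i2: "(\<lambda>x. h x * P x) integrable_on {0..1}" by (rule cper_integrable[OF cper_mult[OF h tp_cper[OF P(1)]]])
    have "I = integral {0..1} (\<lambda>x. h x * cnj (h x)) - integral {0..1} (\<lambda>x. h x * P x)"
      using tp_orth[OF h z P(1)] by (simp add: I_def)
    also have "\<dots> = integral {0..1} (\<lambda>x. h x * (cnj (h x) - P x))"
      using integral_diff[OF i1 i2] by (simp add: algebra_simps)
    finally have eq: "I = integral {0..1} (\<lambda>x. h x * (cnj (h x) - P x))" .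
    have "cmod (integral {0..1} (\<lambda>x. h x * (cnj (h x) - P x))) \<le> (Bh * (2 * \<epsilon>)) * (1 - 0)"
    proof (rule integral_bound)
      have "cper (\<lambda>x. h x * (cnj (h x) + (-1) * P x))"
        by (rule cper_mult[OF h cper_add[OF cper_cnj[OF h] cper_scale[OF tp_cper[OF P(1)]]]])
      then show "continuous_on {0..1} (\<lambda>x. h x * (cnj (h x) - P x))"
        unfolding cper_def by (auto intro: continuous_on_subset)
      fix t :: real assume t: "t \<in> {0..1}"
      have "cmod (h t) * cmod (cnj (h t) - P t) \<le> Bh * (2 * \<epsilon>)"
        by (rule mult_mono) (use Bh[OF t] P(2)[of t] Bh0 in auto)
      then show "cmod (h t * (cnj (h t) - P t)) \<le> Bh * (2 * \<epsilon>)" by (simp add: norm_mult)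
    qed simp
    then show ?thesis using eq by simp
  qed
  have I0: "I = 0"
  proof (rule ccontr)
    assume "I \<noteq> 0"
    then have pos: "cmod I > 0" by simp
    define \<epsilon> where "\<epsilon> = cmod I / (2 * (Bh + 1))"
    have ep: "\<epsilon> > 0" using pos Bh0 by (simp add: \<epsilon>_def)
    have "cmod I \<le> 2 * Bh * \<epsilon>" by (rule small[OF ep])
    also have "\<dots> < cmod I" using pos Bh0 by (simp add: \<epsilon>_def field_simps)
    finally show False by simp
  qed
  define f where "f x = (cmod (h x))\<^sup>2" for x
  have cf: "continuous_on {0..1} f" using h unfolding f_def cper_def
    by (intro continuous_intros) (auto intro: continuous_on_subset)
  have fi: "f integrable_on {0..1}" by (rule integrable_continuous_interval[OF cf])
  have "((\<lambda>x. complex_of_real (f x)) has_integral complex_of_real (integral {0..1} f)) {0..1}"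
    by (rule has_integral_of_real[OF integrable_integral[OF fi]])
  moreover have "(\<lambda>x. complex_of_real (f x)) = (\<lambda>x. h x * cnj (h x))"
    by (auto simp: f_def complex_norm_square[symmetric])
  ultimately have "complex_of_real (integral {0..1} f) = I" unfolding I_def by (metis integral_unique)
  then have "integral {0..1} f = 0" using I0 by simp
  then have f0: "(f has_integral 0) (cbox 0 1)" using integrable_integral[OF fi] by simp
  have hz: "h y = 0" if y: "y \<in> {0..1}" for y
  proof -
    have "f y = 0"
      by (rule has_integral_0_cbox_imp_0[OF _ _ f0]) (use cf y in \<open>auto simp: f_def\<close>)
    then show ?thesis by (simp add: f_def)
  qed
  have "h x = h (x - of_int (floor x))" using cper_int_shift[OF h, of "x - of_int (floor x)" "floor x"] by simp
  moreover have "x - of_int (floor x) \<in> {0..1}" using floor_correct[of x] by simp linarith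
  ultimately show ?thesis using hz by simp
qed



lemma ra_cont: "real_analytic f \<Longrightarrow> continuous_on UNIV f"
proof -
  assume ra: "real_analytic f"
  have "isCont f x" for x
  proof -
    obtain r c where r: "r > 0" and s: "\<And>y. \<bar>y - x\<bar> < r \<Longrightarrow> (\<lambda>n. c n * (y - x) ^ n) sums f y"
      using ra unfolding real_analytic_def by blast
    define K where "K = r / 2"
    have "(\<lambda>n. c n * ((x + K) - x) ^ n) sums f (x + K)" using r by (intro s) (simp add: K_def)
    then have sK: "summable (\<lambda>n. c n * K ^ n)" by (simp add: sums_iff)
    have "norm (0::real) < norm K" using r by (simp add: K_def)
    from isCont_powser[OF sK this] have c0: "isCont (\<lambda>z. \<Sum>n. c n * z ^ n) ((\<lambda>y. y - x) x)" by simp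
    have "isCont (\<lambda>y. y - x) x" by (intro continuous_intros)
    from isCont_o2[OF this c0] have "isCont (\<lambda>y. \<Sum>n. c n * (y - x) ^ n) x" .
    moreover have "eventually (\<lambda>y. f y = (\<Sum>n. c n * (y - x) ^ n)) (nhds x)"
      unfolding eventually_nhds_metric
    proof (intro exI[of _ r] conjI allI impI)
      fix y assume "dist y x < r"
      then have "\<bar>y - x\<bar> < r" by (simp add: dist_real_def)
      then show "f y = (\<Sum>n. c n * (y - x) ^ n)" using s sums_unique by metis
    qed (rule r)
    ultimately show ?thesis using isCont_cong by metis
  qed
  then show ?thesis by (simp add: continuous_at_imp_continuous_on)
qed

lemma sl2_rel:
  fixes B :: "real \<Rightarrow> real^2^2"
  assumes an: "analytic_SL2 B"
    and cj: "\<forall>x. matrix_inv (B (x + \<alpha>)) ** schrodinger v E x ** B x = mat 1"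
  shows "\<And>x. B (x + \<alpha>) $ 1 $ 1 = (E - v x) * B x $ 1 $ 1 - B x $ 2 $ 1"
    and "\<And>x. B (x + \<alpha>) $ 1 $ 2 = (E - v x) * B x $ 1 $ 2 - B x $ 2 $ 2"
    and "\<And>x. B (x + \<alpha>) $ 2 $ 1 = B x $ 1 $ 1"
    and "\<And>x. B (x + \<alpha>) $ 2 $ 2 = B x $ 1 $ 2"
proof -
  have key: "schrodinger v E x ** B x = B (x + \<alpha>)" for x
  proof -
    let ?Bi = "B (x + \<alpha>)"
    have "det ?Bi = 1" using an by (simp add: analytic_SL2_def)
    then have "invertible ?Bi" by (simp add: invertible_det_nz)
    then have "?Bi ** matrix_inv ?Bi = mat 1"
      unfolding invertible_def matrix_inv_def by (rule someI2_ex) auto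
    then have "schrodinger v E x ** B x = ?Bi ** (matrix_inv ?Bi ** schrodinger v E x ** B x)"
      by (simp add: matrix_mul_assoc)
    also have "\<dots> = ?Bi" using cj by simp
    finally show ?thesis .
  qed
  have ent: "(schrodinger v E x ** B x) $ i $ j = schrodinger v E x $ i $ 1 * B x $ 1 $ j + schrodinger v E x $ i $ 2 * B x $ 2 $ j" for x i j
    by (simp add: matrix_matrix_mult_def sum_2)
  show "\<And>x. B (x + \<alpha>) $ 1 $ 1 = (E - v x) * B x $ 1 $ 1 - B x $ 2 $ 1"
    using key ent by (simp add: schrodinger_def)
  show "\<And>x. B (x + \<alpha>) $ 1 $ 2 = (E - v x) * B x $ 1 $ 2 - B x $ 2 $ 2"
    using key ent by (simp add: schrodinger_def)
  show "\<And>x. B (x + \<alpha>) $ 2 $ 1 = B x $ 1 $ 1"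
    using key ent by (simp add: schrodinger_def)
  show "\<And>x. B (x + \<alpha>) $ 2 $ 2 = B x $ 1 $ 2"
    using key ent by (simp add: schrodinger_def)
qed



lemma trig_ex: "trig_poly d vh x = (\<Sum>k\<in>{-int d..int d}. vh k * ex k x)"
  by (simp add: trig_poly_def ex_def)

lemma cper_trig: "cper (trig_poly d vh)"
proof -
  have "cper (\<lambda>x. \<Sum>k\<in>{-int d..int d}. vh k * ex k x)"
  proof (induction rule: finite_induct[OF finite_atLeastAtMost_int[of "-int d" "int d"]])
    case 1 then show ?case by (simp add: cper_def)
  next
    case (2 k K) then show ?case by (simp add: cper_add cper_scale cper_ex)
  qed
  then show ?thesis by (simp add: trig_ex[abs_def])
qed

lemma fc_ex: "fc (ex k) m = (if k = m then 1 else 0)"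
proof -
  have "fc (ex k) m = integral {0..1} (ex (k - m))" unfolding fc_def by (simp add: ex_mult)
  then show ?thesis by (simp add: int_ex)
qed

lemma fc_trig: "fc (trig_poly d vh) m = (if m \<in> {-int d..int d} then vh m else 0)"
proof -
  have "fc (trig_poly d vh) m = fc (\<lambda>x. \<Sum>k\<in>{-int d..int d}. vh k * ex k x) m" by (simp add: trig_ex[abs_def])
  also have "\<dots> = (\<Sum>k\<in>{-int d..int d}. fc (\<lambda>x. vh k * ex k x) m)"
    by (rule fc_sum) (auto intro: cper_scale cper_ex)
  also have "\<dots> = (\<Sum>k\<in>{-int d..int d}. vh k * (if k = m then 1 else 0))"
    by (simp add: fc_scale fc_ex)
  also have "\<dots> = (if m \<in> {-int d..int d} then vh m else 0)"
    by (simp add: if_distrib sum.delta' cong: if_cong)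
  finally show ?thesis .
qed

lemma herm_trig:
  assumes real: "\<forall>x. trig_poly d vh x \<in> \<real>" and k: "\<bar>k\<bar> \<le> int d"
  shows "vh (-k) = cnj (vh k)"
proof -
  have c: "cnj (trig_poly d vh x) = trig_poly d vh x" for x using real Reals_cnj_iff by blast
  have "fc (trig_poly d vh) (-k) = integral {0..1} (\<lambda>x. cnj (trig_poly d vh x * ex (- k) x))"
    unfolding fc_def by (simp add: c ex_cnj)
  also have "\<dots> = cnj (fc (trig_poly d vh) k)" unfolding fc_def integral_cnj ..
  finally have "fc (trig_poly d vh) (-k) = cnj (fc (trig_poly d vh) k)" .
  moreover have "-k \<in> {-int d..int d}" "k \<in> {-int d..int d}" using k by auto
  ultimately show ?thesis by (simp only: fc_trig if_True)
qed

lemma fourier_recur: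
  assumes f: "cper f"
    and eq: "\<And>x. f (x + \<alpha>) + f (x - \<alpha>) + trig_poly d vh x * f x = complex_of_real E * f x"
  shows "(\<Sum>k\<in>{-int d..int d}. vh k * fc f (m - k)) + complex_of_real (2 * cos (2 * pi * (of_int m * \<alpha>))) * fc f m
     = complex_of_real E * fc f m"
proof -
  have c1: "cper (\<lambda>x. f (x + \<alpha>))" by (rule cper_shift[OF f])
  have c2: "cper (\<lambda>x. f (x - \<alpha>))" using cper_shift[OF f, of "-\<alpha>"] by simp
  have c3: "cper (\<lambda>x. trig_poly d vh x * f x)" by (rule cper_mult[OF cper_trig f])
  have s1: "fc (\<lambda>x. f (x + \<alpha>)) m = ex m \<alpha> * fc f m" by (rule fc_shift[OF f])
  have s2: "fc (\<lambda>x. f (x - \<alpha>)) m = ex m (-\<alpha>) * fc f m" using fc_shift[OF f, of "-\<alpha>" m] by simp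
  have s3: "fc (\<lambda>x. trig_poly d vh x * f x) m = (\<Sum>k\<in>{-int d..int d}. vh k * fc f (m - k))"
  proof -
    have "(\<lambda>x. trig_poly d vh x * f x) = (\<lambda>x. \<Sum>k\<in>{-int d..int d}. vh k * (ex k x * f x))"
      by (simp add: trig_ex sum_distrib_right sum_distrib_left mult_ac)
    then have "fc (\<lambda>x. trig_poly d vh x * f x) m = (\<Sum>k\<in>{-int d..int d}. fc (\<lambda>x. vh k * (ex k x * f x)) m)"
      using fc_sum[of "{-int d..int d}" "\<lambda>k x. vh k * (ex k x * f x)" m] cper_scale[OF cper_mult[OF cper_ex f]] by simp
    also have "\<dots> = (\<Sum>k\<in>{-int d..int d}. vh k * fc f (m - k))" by (simp add: fc_scale fc_mult_ex)
    finally show ?thesis .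
  qed
  have "fc (\<lambda>x. f (x + \<alpha>) + f (x - \<alpha>) + trig_poly d vh x * f x) m = fc (\<lambda>x. complex_of_real E * f x) m"
    using eq by simp
  then have h1: "ex m \<alpha> * fc f m + ex m (-\<alpha>) * fc f m + (\<Sum>k\<in>{-int d..int d}. vh k * fc f (m - k)) = complex_of_real E * fc f m"
    by (simp add: fc_add[OF cper_add[OF c1 c2] c3] fc_add[OF c1 c2] s1 s2 s3 fc_scale)
  have h2: "ex m \<alpha> + ex m (-\<alpha>) = complex_of_real (2 * cos (2 * pi * (of_int m * \<alpha>)))"
    by (simp add: ex_cis complex_eq_iff mult_ac)
  have "(\<Sum>k\<in>{-int d..int d}. vh k * fc f (m - k)) + complex_of_real (2 * cos (2 * pi * (of_int m * \<alpha>))) * fc f m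
      = (\<Sum>k\<in>{-int d..int d}. vh k * fc f (m - k)) + (ex m \<alpha> + ex m (-\<alpha>)) * fc f m"
    by (simp only: h2)
  also have "\<dots> = complex_of_real E * fc f m" using h1 by (simp add: algebra_simps)
  finally show ?thesis .
qed



lemma wronsk_indep:
  fixes fa fb :: "real \<Rightarrow> complex"
  assumes W: "\<And>t. fa t * fb (t - \<alpha>) - fb t * fa (t - \<alpha>) = 1"
    and Z: "\<And>t. x * fa t + y * fb t = 0"
  shows "x = 0 \<and> y = 0"
proof -
  have y0: "y = 0"
  proof (rule ccontr)
    assume y: "y \<noteq> 0"
    have fb: "fb t = - (x / y) * fa t" for t
    proof -
      have "y * fb t = - (x * fa t)" using Z[of t] by (simp add: add_eq_0_iff)
      then show ?thesis using y by (simp add: field_simps)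
    qed
    have "fa 0 * fb (0 - \<alpha>) - fb 0 * fa (0 - \<alpha>) = 0" unfolding fb by (simp add: algebra_simps)
    then show False using W[of 0] by simp
  qed
  moreover have "x = 0"
  proof (rule ccontr)
    assume x: "x \<noteq> 0"
    have "fa t = 0" for t using Z[of t] x y0 by simp
    then show False using W[of 0] by simp
  qed
  ultimately show ?thesis by simp
qed

theorem theorem1p5:
  fixes \<alpha> E :: real and d :: nat and vh :: "int \<Rightarrow> complex"
  assumes "\<alpha> \<notin> \<rat>"
    and "d \<ge> 1"
    and "vh (int d) \<noteq> 0"
    and "\<forall>x. trig_poly d vh x \<in> \<real>"
    and "PH2 d \<alpha> (dualL d vh E)"
  shows "\<not> (\<exists>B. analytic_SL2 B \<and>
            (\<forall>x. matrix_inv (B (x + \<alpha>)) ** schrodinger (\<lambda>x. Re (trig_poly d vh x)) E x ** B x = mat 1))"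
proof
  assume "\<exists>B. analytic_SL2 B \<and>
            (\<forall>x. matrix_inv (B (x + \<alpha>)) ** schrodinger (\<lambda>x. Re (trig_poly d vh x)) E x ** B x = mat 1)"
  then obtain B where an: "analytic_SL2 B"
    and cj: "\<forall>x. matrix_inv (B (x + \<alpha>)) ** schrodinger (\<lambda>x. Re (trig_poly d vh x)) E x ** B x = mat 1"
    by blast
  define v where "v = (\<lambda>x. Re (trig_poly d vh x))"
  have vT: "complex_of_real (v x) = trig_poly d vh x" for x
    using assms(4) by (simp add: v_def complex_is_Real_iff complex_eq_iff)
  have herm: "\<And>k. \<bar>k\<bar> \<le> int d \<Longrightarrow> vh (-k) = cnj (vh k)" using herm_trig assms(4) by blast
  interpret D: dual d vh E \<alpha> using assms(2,3) herm by unfold_locales auto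
  have dom: "dominated (2*d) \<alpha> (dualL d vh E) (d - 1)" using assms(5) by (simp add: PH2_def)
  then obtain Ep Em P N where
    per: "\<forall>\<theta>. Ep (\<theta> + 1) = Ep \<theta> \<and> Em (\<theta> + 1) = Em \<theta>"
    and dims: "\<forall>\<theta>. subspace_dim (2*d) (Ep \<theta>) (d - 1) \<and> subspace_dim (2*d) (Em \<theta>) (2*d - (d - 1))"
    and dec: "\<forall>\<theta>. \<forall>u\<in>cvec (2*d). \<exists>!p. fst p \<in> Ep \<theta> \<and> snd p \<in> Em \<theta> \<and> u = (\<lambda>i. fst p i + snd p i)"
    and Pc: "\<forall>i<2*d. \<forall>j<2*d. continuous_on UNIV (\<lambda>\<theta>. P \<theta> i j)"
    and Pp: "\<forall>\<theta>. \<forall>u\<in>cvec (2*d). mvmult (2*d) (P \<theta>) u \<in> Ep \<theta> \<and> (\<lambda>i. u i - mvmult (2*d) (P \<theta>) u i) \<in> Em \<theta>"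
    and inv: "\<forall>\<theta>. mvmult (2*d) (dualL d vh E \<theta>) ` Ep \<theta> = Ep (\<theta> + \<alpha>) \<and> mvmult (2*d) (dualL d vh E \<theta>) ` Em \<theta> = Em (\<theta> + \<alpha>)"
    and NN: "N \<ge> 1"
    and dN: "\<forall>\<theta> u w. u \<in> Ep \<theta> \<longrightarrow> w \<in> Em \<theta> \<longrightarrow> vnorm (2*d) u = 1 \<longrightarrow> vnorm (2*d) w = 1 \<longrightarrow>
          vnorm (2*d) (cocycle_iter (2*d) \<alpha> (dualL d vh E) N \<theta> u) > vnorm (2*d) (cocycle_iter (2*d) \<alpha> (dualL d vh E) N \<theta> w)"
    apply (insert dom[unfolded dominated_def])
    apply (elim exE conjE)
    apply (rule that)
           apply assumption+
    done
  have "dsplit d vh E \<alpha> Ep Em P N"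
    unfolding dsplit_def dsplit_axioms_def
    by (intro conjI) (use D.dual_axioms per dims dec Pc Pp inv NN dN in \<open>simp_all\<close>)
  then interpret S: dsplit d vh E \<alpha> Ep Em P N .
  have cj': "\<forall>x. matrix_inv (B (x + \<alpha>)) ** schrodinger v E x ** B x = mat 1"
    using cj by (simp add: v_def)
  have rel1: "\<And>x. B (x + \<alpha>) $ 1 $ 1 = (E - v x) * B x $ 1 $ 1 - B x $ 2 $ 1"
    and rel2: "\<And>x. B (x + \<alpha>) $ 1 $ 2 = (E - v x) * B x $ 1 $ 2 - B x $ 2 $ 2"
    and rel3: "\<And>x. B (x + \<alpha>) $ 2 $ 1 = B x $ 1 $ 1"
    and rel4: "\<And>x. B (x + \<alpha>) $ 2 $ 2 = B x $ 1 $ 2"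
    using sl2_rel[OF an cj'] by blast+
  have r3: "B x $ 2 $ 1 = B (x - \<alpha>) $ 1 $ 1" for x using rel3[of "x - \<alpha>"] by simp
  have r4: "B x $ 2 $ 2 = B (x - \<alpha>) $ 1 $ 2" for x using rel4[of "x - \<alpha>"] by simp
  define fa where "fa x = complex_of_real (B x $ 1 $ 1)" for x
  define fb where "fb x = complex_of_real (B x $ 1 $ 2)" for x
  have ca: "cper fa"
    unfolding cper_def fa_def using an ra_cont unfolding analytic_SL2_def
    by (auto intro!: continuous_on_of_real)
  have cb: "cper fb"
    unfolding cper_def fb_def using an ra_cont unfolding analytic_SL2_def
    by (auto intro!: continuous_on_of_real)
  have eqa: "fa (x + \<alpha>) + fa (x - \<alpha>) + trig_poly d vh x * fa x = complex_of_real E * fa x" for x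
  proof -
    have "B (x + \<alpha>) $ 1 $ 1 + B (x - \<alpha>) $ 1 $ 1 + v x * B x $ 1 $ 1 = E * B x $ 1 $ 1"
      using rel1[of x] r3[of x] by (simp add: algebra_simps)
    then have "complex_of_real (B (x + \<alpha>) $ 1 $ 1 + B (x - \<alpha>) $ 1 $ 1 + v x * B x $ 1 $ 1) = complex_of_real (E * B x $ 1 $ 1)"
      by simp
    then show ?thesis unfolding fa_def vT[symmetric] by simp
  qed
  have eqb: "fb (x + \<alpha>) + fb (x - \<alpha>) + trig_poly d vh x * fb x = complex_of_real E * fb x" for x
  proof -
    have "B (x + \<alpha>) $ 1 $ 2 + B (x - \<alpha>) $ 1 $ 2 + v x * B x $ 1 $ 2 = E * B x $ 1 $ 2"
      using rel2[of x] r4[of x] by (simp add: algebra_simps)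
    then have "complex_of_real (B (x + \<alpha>) $ 1 $ 2 + B (x - \<alpha>) $ 1 $ 2 + v x * B x $ 1 $ 2) = complex_of_real (E * B x $ 1 $ 2)"
      by simp
    then show ?thesis unfolding fb_def vT[symmetric] by simp
  qed
  have W: "fa t * fb (t - \<alpha>) - fb t * fa (t - \<alpha>) = 1" for t
  proof -
    have "det (B t) = 1" using an by (simp add: analytic_SL2_def)
    then have "B t $ 1 $ 1 * B t $ 2 $ 2 - B t $ 1 $ 2 * B t $ 2 $ 1 = 1" by (simp add: det_2)
    then have "B t $ 1 $ 1 * B (t - \<alpha>) $ 1 $ 2 - B t $ 1 $ 2 * B (t - \<alpha>) $ 1 $ 1 = 1" by (simp add: r3 r4)
    then have "complex_of_real (B t $ 1 $ 1 * B (t - \<alpha>) $ 1 $ 2 - B t $ 1 $ 2 * B (t - \<alpha>) $ 1 $ 1) = 1" by simp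
    then show ?thesis by (simp add: fa_def fb_def)
  qed
  define u where "u n = fc fa (-n)" for n
  define w where "w n = fc fb (-n)" for n
  have rec_gen: "D.recur (\<lambda>n. fc f (-n)) n" if f: "cper f"
    and eq: "\<And>x. f (x + \<alpha>) + f (x - \<alpha>) + trig_poly d vh x * f x = complex_of_real E * f x" for f n
  proof -
    have A: "(\<Sum>k\<in>{-int d..int d}. vh k * fc f (-n - k)) + complex_of_real (2 * cos (2 * pi * (of_int (-n) * \<alpha>))) * fc f (-n)
       = complex_of_real E * fc f (-n)" by (rule fourier_recur[OF f eq])
    have B: "cos (2 * pi * (of_int (-n) * \<alpha>)) = cos (2 * pi * (of_int n * \<alpha>))"
    proof -
      have "2 * pi * (of_int (-n) * \<alpha>) = - (2 * pi * (of_int n * \<alpha>))" by simp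
      then show ?thesis by (simp only: cos_minus)
    qed
    have C: "(\<Sum>k\<in>{-int d..int d}. vh k * fc f (-n - k)) = (\<Sum>k\<in>{-int d..int d}. vh k * fc f (- (n + k)))"
      by (rule sum.cong) simp_all
    have "(\<Sum>k\<in>{-int d..int d}. vh k * fc f (- (n + k))) + complex_of_real (2 * cos (2 * pi * (of_int n * \<alpha>))) * fc f (-n)
       = complex_of_real E * fc f (-n)" using A unfolding B C .
    then show ?thesis unfolding D.recur_def .
  qed
  have ru: "\<And>n. D.recur u n" unfolding u_def by (rule rec_gen[OF ca eqa])
  have rw: "\<And>n. D.recur w n" unfolding w_def by (rule rec_gen[OF cb eqb])
  have du: "\<forall>\<epsilon>>0. \<exists>M. \<forall>n. \<bar>n\<bar> \<ge> M \<longrightarrow> cmod (u n) < \<epsilon>"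
  proof (intro allI impI)
    fix \<epsilon> :: real assume "\<epsilon> > 0"
    then obtain M where "\<forall>m. \<bar>m\<bar> \<ge> M \<longrightarrow> cmod (fc fa m) < \<epsilon>" using riemann_lebesgue[OF ca] by blast
    then show "\<exists>M. \<forall>n. \<bar>n\<bar> \<ge> M \<longrightarrow> cmod (u n) < \<epsilon>" by (intro exI[of _ M]) (auto simp: u_def)
  qed
  have dw: "\<forall>\<epsilon>>0. \<exists>M. \<forall>n. \<bar>n\<bar> \<ge> M \<longrightarrow> cmod (w n) < \<epsilon>"
  proof (intro allI impI)
    fix \<epsilon> :: real assume "\<epsilon> > 0"
    then obtain M where "\<forall>m. \<bar>m\<bar> \<ge> M \<longrightarrow> cmod (fc fb m) < \<epsilon>" using riemann_lebesgue[OF cb] by blast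
    then show "\<exists>M. \<forall>n. \<bar>n\<bar> \<ge> M \<longrightarrow> cmod (w n) < \<epsilon>" by (intro exI[of _ M]) (auto simp: w_def)
  qed
  have indep: "x = 0 \<and> y = 0" if z: "\<forall>n. x * u n + y * w n = 0" for x y
  proof -
    have "fc (\<lambda>t. x * fa t + y * fb t) m = 0" for m
    proof -
      have "fc (\<lambda>t. x * fa t + y * fb t) m = x * fc fa m + y * fc fb m"
        by (simp add: fc_add[OF cper_scale[OF ca] cper_scale[OF cb]] fc_scale)
      also have "\<dots> = x * u (-m) + y * w (-m)" by (simp add: u_def w_def)
      finally show ?thesis using z by simp
    qed
    then have "x * fa t + y * fb t = 0" for t
      using fourier_unique[OF cper_add[OF cper_scale[OF ca] cper_scale[OF cb]]] by blast
    then show ?thesis using wronsk_indep[where fa=fa and fb=fb and \<alpha>=\<alpha> and x=x and y=y] W by blast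
  qed
  show False by (rule S.main_contra[OF ru rw du dw indep])
qed


end
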